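(* Let $G=(V,E)$ have $n\ge2$ vertices and at least one edge, let $\lambda^*=\rho(G)$, let $T\ge1$ be an integer and $\tau>0$. Set $R=(n+\tau)/\lambda^*$, $\nu=\tau/(R\lambda^* )$, $\eta=\sqrt{\log(n)/T}$ and $\alpha=8R\sqrt{\log(n)/T}$. Run the following procedure (Noisy-Order-Packing-MWU): let $w^{(1)}_v=1$ for all $v\in V$; for $t=1,\dots,T$: let $p^{(t)}_v=w^{(t)}_v/\sum_u w^{(t)}_u$; let $\sigma^{(t)}$ be the ordering of $V$ in nonincreasing order of $p^{(t)}$, ties broken by a fixed order on $V$; for each $v$ let $\hat m^{(t)}_v\sim N\big(\tfrac1R(1-q(\sigma^{(t)})_v/\lambda^* ),\nu^2\big)$ independently; set $w^{(t+1)}_v=w^{(t)}_v\exp(-\eta\hat m^{(t)}_v)$. Finally choose $t$ uniformly at random from $[T]$ and return $(p^{(t)},\sigma^{(t)})$. Then the returned $\sigma$ is the ordering of $V$ in nonincreasing order of the returned $p$, and with probability at least $1/2$ (over the noise and the choice of $t$), $\rho(S^*_\sigma)\ge(1-2\alpha)\lambda^*$.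
   Context: For nonempty $S\subseteq V$, $\rho(S)=|E(S)|/|S|$ with $E(S)$ the edges inside $S$, and $\rho(G)=\max_{\emptyset\ne S\subseteq V}\rho(S)$. For an ordering $\sigma$ of $V$ and $v\in V$, $q(\sigma)_v=|\{\{u,v\}\in E: u \text{ precedes } v \text{ in }\sigma\}|$; $S^\sigma_x$ is the set of vertices equal to or preceding $x$ in $\sigma$, and $S^*_\sigma$ is a prefix $S^\sigma_x$ of maximum density. $\log$ is the natural logarithm. *)

theory Defs
  imports "HOL-Probability.Probability"
begin

definition simple_graph :: "'a set \<Rightarrow> 'a set set \<Rightarrow> bool" where
  "simple_graph V E \<longleftrightarrow> finite V \<and> (\<forall>e\<in>E. e \<subseteq> V \<and> card e = 2)"

definition edges_in :: "'a set set \<Rightarrow> 'a set \<Rightarrow> 'a set set" where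
  "edges_in E S = {e \<in> E. e \<subseteq> S}"

definition dens :: "'a set set \<Rightarrow> 'a set \<Rightarrow> real" where
  "dens E S = real (card (edges_in E S)) / real (card S)"

definition max_density :: "'a set \<Rightarrow> 'a set set \<Rightarrow> real" where
  "max_density V E = Max {dens E S | S. S \<subseteq> V \<and> S \<noteq> {}}"

(* Orderings of V are represented as lists sigma with distinct sigma and set sigma = V.
   Vertices strictly preceding v in sigma: *)
definition preceding :: "'a list \<Rightarrow> 'a \<Rightarrow> 'a set" where
  "preceding \<sigma> v = set (takeWhile (\<lambda>x. x \<noteq> v) \<sigma>)"

definition qdeg :: "'a set set \<Rightarrow> 'a list \<Rightarrow> 'a \<Rightarrow> nat" where
  "qdeg E \<sigma> v = card {e \<in> E. \<exists>u. e = {u, v} \<and> u \<in> preceding \<sigma> v}"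

definition prefix_set :: "'a list \<Rightarrow> 'a \<Rightarrow> 'a set" where
  "prefix_set \<sigma> x = insert x (preceding \<sigma> x)"

definition best_prefix :: "'a set set \<Rightarrow> 'a list \<Rightarrow> 'a set" where
  "best_prefix E \<sigma> = (SOME S. (\<exists>x\<in>set \<sigma>. S = prefix_set \<sigma> x) \<and>
      (\<forall>y\<in>set \<sigma>. dens E (prefix_set \<sigma> y) \<le> dens E S))"

(* ordering of V in nonincreasing order of p, ties broken by the fixed linear order on 'a
   (sort_key is stable, and the input list is sorted w.r.t. the fixed order) *)
definition order_by :: "'a::linorder set \<Rightarrow> ('a \<Rightarrow> real) \<Rightarrow> 'a list" where
  "order_by V p = sort_key (\<lambda>v. - p v) (sorted_list_of_set V)"

definition normalize :: "'a set \<Rightarrow> ('a \<Rightarrow> real) \<Rightarrow> 'a \<Rightarrow> real" where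
  "normalize V w v = w v / (\<Sum>u\<in>V. w u)"

(* Noisy-Order-Packing-MWU weights.  mwu_weights V E lam R eta Z k = w^{(k+1)}.
   Z (t, v) is the Gaussian noise of round t (distributed N(0, nu^2)), so that
   mhat^{(t)}_v = (1/R) (1 - q(sigma^{(t)})_v / lam) + Z (t, v) ~ N((1/R)(1 - q/lam), nu^2). *)
fun mwu_weights :: "'a::linorder set \<Rightarrow> 'a set set \<Rightarrow> real \<Rightarrow> real \<Rightarrow> real \<Rightarrow> (nat \<times> 'a \<Rightarrow> real)
    \<Rightarrow> nat \<Rightarrow> 'a \<Rightarrow> real" where
  "mwu_weights V E lam R eta Z 0 = (\<lambda>v. 1)"
| "mwu_weights V E lam R eta Z (Suc k) =
     (let w = mwu_weights V E lam R eta Z k;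
          \<sigma> = order_by V (normalize V w)
      in (\<lambda>v. w v * exp (- eta * ((1 / R) * (1 - real (qdeg E \<sigma> v) / lam) + Z (Suc k, v)))))"

definition mwu_p :: "'a::linorder set \<Rightarrow> 'a set set \<Rightarrow> real \<Rightarrow> real \<Rightarrow> real \<Rightarrow> (nat \<times> 'a \<Rightarrow> real)
    \<Rightarrow> nat \<Rightarrow> 'a \<Rightarrow> real" where
  "mwu_p V E lam R eta Z t = normalize V (mwu_weights V E lam R eta Z (t - 1))"

definition mwu_sigma :: "'a::linorder set \<Rightarrow> 'a set set \<Rightarrow> real \<Rightarrow> real \<Rightarrow> real \<Rightarrow> (nat \<times> 'a \<Rightarrow> real)
    \<Rightarrow> nat \<Rightarrow> 'a list" where
  "mwu_sigma V E lam R eta Z t = order_by V (mwu_p V E lam R eta Z t)"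

definition mwu_space :: "'a set \<Rightarrow> nat \<Rightarrow> real \<Rightarrow> ((nat \<times> 'a \<Rightarrow> real) \<times> nat) measure" where
  "mwu_space V T nu =
     (PiM ({1..T} \<times> V) (\<lambda>_. density lborel (normal_density 0 nu)))
       \<Otimes>\<^sub>M uniform_count_measure {1..T}"

end

theory Submission
  imports Defs
begin


lemma insort_key_cong:
  assumes "\<forall>x\<in>set (y#ys). \<forall>z\<in>set (y#ys). (f x \<le> f z) = (g x \<le> g z)"
  shows "insort_key f y ys = insort_key g y ys"
  using assms by (induction ys) auto

lemma sort_key_cong_cmp:
  assumes "\<forall>x\<in>set xs. \<forall>z\<in>set xs. (f x \<le> f z) = (g x \<le> g z)"
  shows "sort_key f xs = sort_key g xs"
  using assms
proof (induction xs)
  case Nil then show ?case by simp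
next
  case (Cons y ys)
  then have "sort_key f ys = sort_key g ys" by simp
  moreover have "insort_key f y (sort_key g ys) = insort_key g y (sort_key g ys)"
    using Cons.prems by (intro insort_key_cong) (auto simp: set_sort)
  ultimately show ?case by simp
qed

lemma order_by_cong_cmp:
  assumes "finite V" "\<forall>x\<in>V. \<forall>z\<in>V. (p x \<ge> p z) = (p' x \<ge> p' z)"
  shows "order_by V p = order_by V p'"
  unfolding order_by_def using assms by (intro sort_key_cong_cmp) auto

lemma order_by_props:
  assumes "finite V"
  shows "distinct (order_by V p)" "set (order_by V p) = V"
    "sorted_wrt (\<lambda>u v. p u \<ge> p v) (order_by V p)"
proof -
  show "distinct (order_by V p)" "set (order_by V p) = V"
    using assms by (auto simp: order_by_def distinct_sort set_sort)
  have "sorted (map (\<lambda>v. - p v) (order_by V p))"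
    unfolding order_by_def by (rule sorted_sort_key)
  then show "sorted_wrt (\<lambda>u v. p u \<ge> p v) (order_by V p)"
    by (simp add: sorted_map)
qed

lemma preceding_nth:
  assumes "distinct s" "i < length s"
  shows "preceding s (s ! i) = set (take i s)"
proof -
  have "takeWhile (\<lambda>x. x \<noteq> s ! i) s = take i s"
    by (rule takeWhile_eq_take_P_nth) (use assms in \<open>auto simp: nth_eq_iff_index_eq\<close>)
  then show ?thesis by (simp add: preceding_def)
qed

lemma prefix_set_nth:
  assumes "distinct s" "i < length s"
  shows "prefix_set s (s ! i) = set (take (Suc i) s)"
  using assms by (simp add: prefix_set_def preceding_nth take_Suc_conv_app_nth)

lemma qdeg_le:
  assumes "distinct s" "v \<in> set s"
  shows "qdeg E s v \<le> length s - 1"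
proof -
  obtain i where i: "i < length s" "s ! i = v" using assms by (auto simp: in_set_conv_nth)
  have "{e \<in> E. \<exists>u. e = {u, v} \<and> u \<in> preceding s v} \<subseteq> (\<lambda>u. {u,v}) ` preceding s v" by auto
  moreover have fin: "finite (preceding s v)" by (simp add: preceding_def)
  ultimately have "qdeg E s v \<le> card (preceding s v)"
    unfolding qdeg_def by (meson card_image_le card_mono finite_imageI order_trans)
  also have "\<dots> \<le> i" using preceding_nth[OF assms(1) i(1)] i card_length[of "take i s"] by simp
  finally show ?thesis using i by linarith
qed

lemma abel_bound:
  fixes a e :: "nat \<Rightarrow> real"
  assumes mono: "\<forall>i. a (Suc i) \<le> a i" and e0: "e 0 = 0"
    and eb: "\<forall>i. e (Suc i) \<le> D * real (Suc i)"
  shows "(\<Sum>i<Suc N. a i * (e (Suc i) - e i)) + (D * real (Suc N) - e (Suc N)) * a N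
           \<le> D * (\<Sum>i<Suc N. a i)"
proof (induction N)
  case 0
  then show ?case using e0 by (simp add: algebra_simps)
next
  case (Suc N)
  have nn: "0 \<le> D * real (Suc N) - e (Suc N)" using eb by (auto simp: algebra_simps)
  have np: "a (Suc N) - a N \<le> 0" using mono by auto
  have "(D * real (Suc N) - e (Suc N)) * (a (Suc N) - a N) \<le> 0"
    using mult_nonneg_nonpos[OF nn np] .
  then show ?case using Suc.IH by (simp add: algebra_simps)
qed

lemma edges_in_insert:
  assumes "\<forall>e\<in>E. card e = 2" "x \<notin> A"
  shows "edges_in E (insert x A) = edges_in E A \<union> {e \<in> E. \<exists>u. e = {u, x} \<and> u \<in> A}"
    and "edges_in E A \<inter> {e \<in> E. \<exists>u. e = {u, x} \<and> u \<in> A} = {}"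
proof -
  show "edges_in E (insert x A) = edges_in E A \<union> {e \<in> E. \<exists>u. e = {u, x} \<and> u \<in> A}"
  proof (intro equalityI subsetI)
    fix e assume e: "e \<in> edges_in E (insert x A)"
    then have eE: "e \<in> E" "e \<subseteq> insert x A" by (auto simp: edges_in_def)
    then obtain a b where ab: "e = {a, b}" "a \<noteq> b" using assms(1) by (meson card_2_iff)
    show "e \<in> edges_in E A \<union> {e \<in> E. \<exists>u. e = {u, x} \<and> u \<in> A}"
    proof (cases "e \<subseteq> A")
      case True then show ?thesis using eE by (auto simp: edges_in_def)
    next
      case False
      then have "a = x \<or> b = x" using eE ab by auto
      then show ?thesis using eE ab by (auto simp: insert_commute)
    qed
  qed (auto simp: edges_in_def)
  show "edges_in E A \<inter> {e \<in> E. \<exists>u. e = {u, x} \<and> u \<in> A} = {}"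
    using assms(2) by (auto simp: edges_in_def)
qed

lemma qdeg_nth:
  assumes "distinct s" "i < length s" "\<forall>e\<in>E. card e = 2" "finite E"
  shows "real (qdeg E s (s ! i)) = real (card (edges_in E (set (take (Suc i) s))))
            - real (card (edges_in E (set (take i s))))"
proof -
  have nin: "s ! i \<notin> set (take i s)"
    using assms by (auto simp: in_set_conv_nth nth_eq_iff_index_eq)
  have st: "set (take (Suc i) s) = insert (s ! i) (set (take i s))"
    using assms by (simp add: take_Suc_conv_app_nth)
  have fin: "finite (edges_in E A)" "finite {e \<in> E. \<exists>u. e = {u, x} \<and> u \<in> A}" for A x
    using assms(4) by (auto simp: edges_in_def)
  have "card (edges_in E (set (take (Suc i) s))) = card (edges_in E (set (take i s)))
      + card {e \<in> E. \<exists>u. e = {u, s ! i} \<and> u \<in> set (take i s)}"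
    unfolding st edges_in_insert(1)[OF assms(3) nin]
    by (rule card_Un_disjoint[OF fin edges_in_insert(2)[OF assms(3) nin]])
  then show ?thesis
    by (simp add: qdeg_def preceding_nth[OF assms(1,2)])
qed

lemma best_prefix_spec:
  assumes "s \<noteq> []"
  shows "(\<exists>x\<in>set s. best_prefix E s = prefix_set s x) \<and>
         (\<forall>y\<in>set s. dens E (prefix_set s y) \<le> dens E (best_prefix E s))"
proof -
  let ?F = "(\<lambda>y. dens E (prefix_set s y)) ` set s"
  have "Max ?F \<in> ?F" using assms by (intro Max_in) auto
  then obtain x where x: "x \<in> set s" "dens E (prefix_set s x) = Max ?F" by auto
  have "\<forall>y\<in>set s. dens E (prefix_set s y) \<le> dens E (prefix_set s x)"
    using x by auto
  then have "\<exists>S. (\<exists>x\<in>set s. S = prefix_set s x) \<and>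
      (\<forall>y\<in>set s. dens E (prefix_set s y) \<le> dens E S)" using x(1) by blast
  from someI_ex[OF this] show ?thesis unfolding best_prefix_def by blast
qed

lemma dens_nonneg: "dens E S \<ge> 0"
  by (simp add: dens_def)

lemma pq_le_best:
  assumes ds: "distinct s" and ne: "s \<noteq> []" and srt: "sorted_wrt (\<lambda>u v. p u \<ge> p v) s"
    and pnn: "\<forall>v\<in>set s. p v \<ge> 0" and psum: "(\<Sum>v\<in>set s. p v) = 1"
    and E2: "\<forall>e\<in>E. card e = 2" and fE: "finite E"
  shows "(\<Sum>v\<in>set s. p v * real (qdeg E s v)) \<le> dens E (best_prefix E s)"
proof -
  define D where "D = dens E (best_prefix E s)"
  define L where "L = length s"
  define a where "a i = (if i < L then p (s ! i) else 0)" for i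
  define e where "e i = real (card (edges_in E (set (take i s))))" for i
  have D0: "D \<ge> 0" unfolding D_def by (rule dens_nonneg)
  have mono: "\<forall>i. a (Suc i) \<le> a i"
  proof
    fix i show "a (Suc i) \<le> a i"
    proof (cases "Suc i < L")
      case True then show ?thesis using srt by (auto simp: a_def L_def sorted_wrt_iff_nth_less)
    next
      case False then show ?thesis using pnn by (auto simp: a_def L_def)
    qed
  qed
  have e0: "e 0 = 0"
  proof -
    have "edges_in E {} = {}" using E2 by (auto simp: edges_in_def)
    then show ?thesis by (simp add: e_def)
  qed
  have ebi: "e (Suc i) \<le> D * real (Suc i)" if "i < L" for i
  proof -
    have "dens E (prefix_set s (s ! i)) \<le> D"
      using best_prefix_spec[OF ne, of E] that by (auto simp: D_def L_def)
    moreover have "card (set (take (Suc i) s)) = Suc i"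
      using that ds by (simp add: L_def distinct_card)
    ultimately show ?thesis
      using that by (simp add: prefix_set_nth[OF ds] L_def dens_def e_def divide_le_eq)
  qed
  have eb: "\<forall>i. e (Suc i) \<le> D * real (Suc i)"
  proof
    fix i show "e (Suc i) \<le> D * real (Suc i)"
    proof (cases "i < L")
      case True then show ?thesis by (rule ebi)
    next
      case False
      obtain k where k: "L = Suc k" using ne by (cases s) (auto simp: L_def)
      have "e (Suc i) = e (Suc k)" using False k by (simp add: e_def L_def)
      also have "\<dots> \<le> D * real (Suc k)" using ebi k by auto
      also have "\<dots> \<le> D * real (Suc i)" using False k D0 by (intro mult_left_mono) auto
      finally show ?thesis .
    qed
  qed
  obtain N where N: "L = Suc N" using ne by (cases s) (auto simp: L_def)
  have "(\<Sum>v\<in>set s. p v * real (qdeg E s v)) = (\<Sum>i<L. p (s ! i) * real (qdeg E s (s ! i)))"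
    unfolding L_def by (simp add: sum_list_distinct_conv_sum_set[symmetric] ds sum_list_sum_nth atLeast0LessThan)
  also have "\<dots> = (\<Sum>i<Suc N. a i * (e (Suc i) - e i))"
    unfolding N[symmetric] by (intro sum.cong refl) (auto simp: a_def e_def qdeg_nth[OF ds _ E2 fE] L_def)
  also have "\<dots> \<le> D * (\<Sum>i<Suc N. a i) - (D * real (Suc N) - e (Suc N)) * a N"
    using abel_bound[OF mono e0 eb, of N] by simp
  also have "\<dots> \<le> D * (\<Sum>i<Suc N. a i)"
  proof -
    have "0 \<le> D * real (Suc N) - e (Suc N)" using eb by (auto simp: algebra_simps)
    moreover have "a N \<ge> 0" using pnn N by (auto simp: a_def L_def)
    ultimately show ?thesis by simp
  qed
  also have "(\<Sum>i<Suc N. a i) = 1"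
  proof -
    have "(\<Sum>i<Suc N. a i) = (\<Sum>i<L. p (s ! i))" unfolding N[symmetric] by (auto simp: a_def)
    also have "\<dots> = (\<Sum>v\<in>set s. p v)"
      unfolding L_def by (simp add: sum_list_distinct_conv_sum_set[symmetric] ds sum_list_sum_nth atLeast0LessThan)
    finally show ?thesis using psum by simp
  qed
  finally show ?thesis by (simp add: D_def)
qed

lemma sumq_ge:
  assumes ds: "distinct s" and SV: "S \<subseteq> set s" and E2: "\<forall>e\<in>E. card e = 2"
  shows "card (edges_in E S) \<le> (\<Sum>v\<in>S. qdeg E s v)"
proof -
  have fS: "finite S" using SV finite_subset by blast
  have sub: "edges_in E S \<subseteq> (\<Union>v\<in>S. {e \<in> E. \<exists>u. e = {u, v} \<and> u \<in> preceding s v})"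
  proof
    fix e assume e: "e \<in> edges_in E S"
    then have eE: "e \<in> E" "e \<subseteq> S" by (auto simp: edges_in_def)
    then obtain a b where ab: "e = {a, b}" "a \<noteq> b" using E2 by (meson card_2_iff)
    have "a \<in> set s" "b \<in> set s" using ab eE SV by auto
    then obtain i j where ij: "i < length s" "s ! i = a" "j < length s" "s ! j = b"
      by (auto simp: in_set_conv_nth)
    have "i \<noteq> j" using ij ab by auto
    then consider "i < j" | "j < i" by linarith
    then show "e \<in> (\<Union>v\<in>S. {e \<in> E. \<exists>u. e = {u, v} \<and> u \<in> preceding s v})"
    proof cases
      case 1
      then have "a \<in> preceding s b" using ij ds by (auto simp: preceding_nth in_set_conv_nth intro!: exI[of _ i])
      moreover have "b \<in> S" using eE ab by auto
      ultimately show ?thesis using eE ab by blast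
    next
      case 2
      then have "b \<in> preceding s a" using ij ds by (auto simp: preceding_nth in_set_conv_nth intro!: exI[of _ j])
      moreover have "a \<in> S" using eE ab by auto
      moreover have "e = {b, a}" using ab by blast
      ultimately show ?thesis using eE by blast
    qed
  qed
  have fin: "finite (\<Union>v\<in>S. {e \<in> E. \<exists>u. e = {u, v} \<and> u \<in> preceding s v})"
  proof -
    have "(\<Union>v\<in>S. {e \<in> E. \<exists>u. e = {u, v} \<and> u \<in> preceding s v}) \<subseteq>
          (\<lambda>(u,v). {u,v}) ` (set s \<times> S)"
    proof
      fix e assume "e \<in> (\<Union>v\<in>S. {e \<in> E. \<exists>u. e = {u, v} \<and> u \<in> preceding s v})"
      then obtain v u where vu: "v \<in> S" "u \<in> preceding s v" "e = {u,v}" by blast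
      have "preceding s v \<subseteq> set s" by (auto simp: preceding_def dest: set_takeWhileD)
      then have "(u, v) \<in> set s \<times> S" using vu by auto
      then show "e \<in> (\<lambda>(u,v). {u,v}) ` (set s \<times> S)" using vu(3) by (auto intro: rev_image_eqI)
    qed
    moreover have "finite ((\<lambda>(u,v). {u,v}) ` (set s \<times> S))" using fS by simp
    ultimately show ?thesis by (rule finite_subset)
  qed
  have "card (edges_in E S) \<le> card (\<Union>v\<in>S. {e \<in> E. \<exists>u. e = {u, v} \<and> u \<in> preceding s v})"
    by (rule card_mono[OF fin sub])
  also have "\<dots> \<le> (\<Sum>v\<in>S. qdeg E s v)"
    unfolding qdeg_def by (rule card_UN_le[OF fS])
  finally show ?thesis .
qed

lemma dens_le_card:
  assumes "\<forall>e\<in>E. card e = 2" "finite S"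
  shows "dens E S \<le> real (card S)"
proof -
  have "edges_in E S \<subseteq> (\<lambda>(a,b). {a,b}) ` (S \<times> S)"
  proof
    fix e assume "e \<in> edges_in E S"
    then have "e \<in> E" "e \<subseteq> S" by (auto simp: edges_in_def)
    then obtain a b where "e = {a, b}" using assms(1) by (meson card_2_iff)
    then show "e \<in> (\<lambda>(a,b). {a,b}) ` (S \<times> S)" using \<open>e \<subseteq> S\<close> by auto
  qed
  then have "card (edges_in E S) \<le> card (S \<times> S)"
    using assms(2) by (meson card_image_le card_mono finite_SigmaI finite_imageI order_trans)
  then have c: "real (card (edges_in E S)) \<le> real (card S) * real (card S)"
    by (simp add: card_cartesian_product flip: of_nat_mult)
  show ?thesis
  proof (cases "card S = 0")
    case True then show ?thesis by (simp add: dens_def)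
  next
    case False then show ?thesis using c by (simp add: dens_def divide_le_eq)
  qed
qed

lemma max_density_facts:
  assumes G: "simple_graph V E" and Ene: "E \<noteq> {}"
  shows "\<And>S. S \<subseteq> V \<Longrightarrow> S \<noteq> {} \<Longrightarrow> dens E S \<le> max_density V E"
    and "\<exists>S. S \<subseteq> V \<and> S \<noteq> {} \<and> dens E S = max_density V E"
    and "max_density V E > 0"
    and "max_density V E \<le> real (card V)"
proof -
  have fV: "finite V" and EV: "\<forall>e\<in>E. e \<subseteq> V \<and> card e = 2" using G by (auto simp: simple_graph_def)
  let ?F = "{dens E S | S. S \<subseteq> V \<and> S \<noteq> {}}"
  have fF: "finite ?F"
  proof -
    have "?F \<subseteq> dens E ` Pow V" by auto
    then show ?thesis using fV finite_subset by blast
  qed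
  obtain e where e: "e \<in> E" using Ene by auto
  then have e2: "e \<subseteq> V" "card e = 2" using EV by auto
  then have ene: "e \<noteq> {}" by auto
  have neF: "?F \<noteq> {}" using e2 ene by auto
  show ge: "\<And>S. S \<subseteq> V \<Longrightarrow> S \<noteq> {} \<Longrightarrow> dens E S \<le> max_density V E"
    unfolding max_density_def using fF by (intro Max_ge) auto
  show "\<exists>S. S \<subseteq> V \<and> S \<noteq> {} \<and> dens E S = max_density V E"
  proof -
    have "max_density V E \<in> ?F" using Max_in[OF fF neF] unfolding max_density_def .
    then obtain S where "max_density V E = dens E S" "S \<subseteq> V" "S \<noteq> {}" unfolding mem_Collect_eq by metis
    then show ?thesis by metis
  qed
  have "e \<in> edges_in E e" using e by (auto simp: edges_in_def)
  moreover have "finite (edges_in E e)"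
  proof -
    have "edges_in E e \<subseteq> Pow e" by (auto simp: edges_in_def)
    moreover have "finite e" using e2 fV finite_subset by blast
    ultimately show ?thesis using finite_subset by blast
  qed
  ultimately have "card (edges_in E e) > 0" by (auto simp: card_gt_0_iff)
  then have "dens E e > 0" using e2 by (simp add: dens_def)
  then show "max_density V E > 0" using ge[OF e2(1) ene] by linarith
  have "max_density V E \<in> ?F" using Max_in[OF fF neF] unfolding max_density_def .
  then obtain S where S: "S \<subseteq> V" "S \<noteq> {}" "dens E S = max_density V E" unfolding mem_Collect_eq by metis
  have "dens E S \<le> real (card S)" using EV S fV by (intro dens_le_card) (auto intro: finite_subset)
  also have "\<dots> \<le> real (card V)" using S fV by (simp add: card_mono)
  finally show "max_density V E \<le> real (card V)" using S by simp
qed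



definition ordk where
  "ordk V E lam R eta Z k = order_by V (normalize V (mwu_weights V E lam R eta Z k))"
definition mm where
  "mm V E lam R eta Z k v = (1 / R) * (1 - real (qdeg E (ordk V E lam R eta Z k) v) / lam)"
definition XX where
  "XX V E lam R eta Z k = (\<Sum>v\<in>V. normalize V (mwu_weights V E lam R eta Z k) v * mm V E lam R eta Z k v)"

lemma W_Suc:
  "mwu_weights V E lam R eta Z (Suc k) v =
     mwu_weights V E lam R eta Z k v * exp (- eta * (mm V E lam R eta Z k v + Z (Suc k, v)))"
  by (simp add: Let_def mm_def ordk_def)

lemma W_closed:
  "mwu_weights V E lam R eta Z k v = exp (- eta * (\<Sum>j<k. mm V E lam R eta Z j v + Z (Suc j, v)))"
proof (induction k)
  case 0 then show ?case by simp
next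
  case (Suc k) then show ?case by (simp del: mwu_weights.simps(2) add: W_Suc algebra_simps flip: exp_add)
qed

lemma W_pos: "mwu_weights V E lam R eta Z k v > 0"
  by (simp add: W_closed)

lemma normalize_pos:
  assumes "finite V" "V \<noteq> {}" "\<forall>v\<in>V. w v > 0"
  shows "\<forall>v\<in>V. normalize V w v \<ge> 0" "(\<Sum>v\<in>V. normalize V w v) = 1"
proof -
  have "(\<Sum>u\<in>V. w u) > 0" using assms by (intro sum_pos) auto
  then show "\<forall>v\<in>V. normalize V w v \<ge> 0" "(\<Sum>v\<in>V. normalize V w v) = 1"
    using assms by (auto simp: normalize_def simp flip: sum_divide_distrib)
qed

lemma W_dep:
  assumes fV: "finite V" and eq: "\<forall>j\<in>{1..k}. \<forall>v\<in>V. Z (j, v) = Z' (j, v)"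
  shows "\<forall>v\<in>V. mwu_weights V E lam R eta Z k v = mwu_weights V E lam R eta Z' k v"
  using eq
proof (induction k)
  case 0 then show ?case by simp
next
  case (Suc k)
  then have IH: "\<forall>v\<in>V. mwu_weights V E lam R eta Z k v = mwu_weights V E lam R eta Z' k v" by auto
  then have "\<forall>v\<in>V. normalize V (mwu_weights V E lam R eta Z k) v = normalize V (mwu_weights V E lam R eta Z' k) v"
    by (simp add: normalize_def)
  then have "ordk V E lam R eta Z k = ordk V E lam R eta Z' k"
    unfolding ordk_def using fV by (intro order_by_cong_cmp) auto
  then have "mm V E lam R eta Z k v = mm V E lam R eta Z' k v" for v by (simp add: mm_def)
  then show ?case using IH Suc.prems by (simp del: mwu_weights.simps(2) add: W_Suc)
qed

lemma dep_all:
  assumes fV: "finite V" and eq: "\<forall>j\<in>{1..k}. \<forall>v\<in>V. Z (j, v) = Z' (j, v)"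
  shows "ordk V E lam R eta Z k = ordk V E lam R eta Z' k"
    and "mm V E lam R eta Z k = mm V E lam R eta Z' k"
    and "XX V E lam R eta Z k = XX V E lam R eta Z' k"
    and "(\<Sum>v\<in>V. mwu_weights V E lam R eta Z k v) = (\<Sum>v\<in>V. mwu_weights V E lam R eta Z' k v)"
proof -
  note W = W_dep[OF assms, of E lam R eta]
  then have s: "(\<Sum>v\<in>V. mwu_weights V E lam R eta Z k v) = (\<Sum>v\<in>V. mwu_weights V E lam R eta Z' k v)"
    by (intro sum.cong) auto
  then show "(\<Sum>v\<in>V. mwu_weights V E lam R eta Z k v) = (\<Sum>v\<in>V. mwu_weights V E lam R eta Z' k v)" .
  have n: "\<forall>v\<in>V. normalize V (mwu_weights V E lam R eta Z k) v = normalize V (mwu_weights V E lam R eta Z' k) v"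
    using W by (simp add: normalize_def)
  then show o: "ordk V E lam R eta Z k = ordk V E lam R eta Z' k"
    unfolding ordk_def using fV by (intro order_by_cong_cmp) auto
  then show m: "mm V E lam R eta Z k = mm V E lam R eta Z' k" by (simp add: mm_def fun_eq_iff)
  show "XX V E lam R eta Z k = XX V E lam R eta Z' k"
    unfolding XX_def m using n by (intro sum.cong) auto
qed



abbreviation "LL V \<equiv> {xs. set xs \<subseteq> V \<and> length xs \<le> card V}"

lemma measurable_order_by:
  fixes f :: "'b \<Rightarrow> 'a::linorder \<Rightarrow> real"
  assumes fV: "finite V" and mf: "\<And>v. v \<in> V \<Longrightarrow> (\<lambda>Z. f Z v) \<in> borel_measurable MM"
  shows "(\<lambda>Z. order_by V (f Z)) \<in> measurable MM (count_space (LL V))"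
proof -
  have fL: "finite (LL V)" by (rule finite_lists_length_le[OF fV])
  show ?thesis unfolding measurable_count_space_eq2[OF fL]
  proof (intro conjI ballI)
    show "(\<lambda>Z. order_by V (f Z)) \<in> space MM \<rightarrow> LL V"
    proof
      fix Z
      have "set (order_by V (f Z)) = V" "distinct (order_by V (f Z))" using order_by_props[OF fV] by auto
      then have "length (order_by V (f Z)) = card V" by (metis distinct_card)
      then show "order_by V (f Z) \<in> LL V" using \<open>set (order_by V (f Z)) = V\<close> by simp
    qed
    fix a
    define C where "C Z = {(u,v) \<in> V \<times> V. f Z u \<le> f Z v}" for Z
    define Rs where "Rs = C ` {Z \<in> space MM. order_by V (f Z) = a}"
    have fR: "finite Rs"
    proof -
      have "Rs \<subseteq> Pow (V \<times> V)" by (auto simp: Rs_def C_def)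
      then show ?thesis using fV finite_subset by blast
    qed
    have eq: "(\<lambda>Z. order_by V (f Z)) -` {a} \<inter> space MM = (\<Union>R\<in>Rs. {Z \<in> space MM. C Z = R})"
    proof (intro equalityI subsetI)
      fix Z assume "Z \<in> (\<lambda>Z. order_by V (f Z)) -` {a} \<inter> space MM"
      then show "Z \<in> (\<Union>R\<in>Rs. {Z \<in> space MM. C Z = R})" by (auto simp: Rs_def)
    next
      fix Z assume "Z \<in> (\<Union>R\<in>Rs. {Z \<in> space MM. C Z = R})"
      then obtain Z0 where Z0: "Z0 \<in> space MM" "order_by V (f Z0) = a" "C Z = C Z0" "Z \<in> space MM"
        by (auto simp: Rs_def)
      have "\<forall>x\<in>V. \<forall>z\<in>V. (f Z x \<ge> f Z z) = (f Z0 x \<ge> f Z0 z)"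
      proof (intro ballI)
        fix x z assume xz: "x \<in> V" "z \<in> V"
        have "((z, x) \<in> C Z) = ((z, x) \<in> C Z0)" using Z0 by simp
        then show "(f Z x \<ge> f Z z) = (f Z0 x \<ge> f Z0 z)" using xz by (simp add: C_def)
      qed
      then have "order_by V (f Z) = order_by V (f Z0)" by (rule order_by_cong_cmp[OF fV])
      then show "Z \<in> (\<lambda>Z. order_by V (f Z)) -` {a} \<inter> space MM" using Z0 by simp
    qed
    have "{Z \<in> space MM. C Z = R} \<in> sets MM" if R: "R \<in> Rs" for R
    proof -
      have RV: "R \<subseteq> V \<times> V" using R by (auto simp: Rs_def C_def)
      have "C Z = R \<longleftrightarrow> (\<forall>u\<in>V. \<forall>v\<in>V. (f Z u \<le> f Z v) = ((u,v) \<in> R))" for Z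
      proof
        assume "C Z = R" then show "\<forall>u\<in>V. \<forall>v\<in>V. (f Z u \<le> f Z v) = ((u,v) \<in> R)"
          unfolding C_def by blast
      next
        assume H: "\<forall>u\<in>V. \<forall>v\<in>V. (f Z u \<le> f Z v) = ((u,v) \<in> R)"
        show "C Z = R"
        proof (intro equalityI subsetI)
          fix x assume "x \<in> C Z" then show "x \<in> R" using H unfolding C_def by blast
        next
          fix x assume "x \<in> R" then show "x \<in> C Z" using H RV unfolding C_def by blast
        qed
      qed
      then have "{Z \<in> space MM. C Z = R} = {Z \<in> space MM. \<forall>u\<in>V. \<forall>v\<in>V. (f Z u \<le> f Z v) = ((u,v) \<in> R)}"
        by simp
      also have "\<dots> \<in> sets MM"
      proof -
        have "Measurable.pred MM (\<lambda>Z. \<forall>u\<in>V. \<forall>v\<in>V. (f Z u \<le> f Z v) = ((u,v) \<in> R))"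
        proof (intro pred_intros_finite(3) fV)
          fix u v assume uv: "u \<in> V" "v \<in> V"
          note [measurable] = mf[OF uv(1)] mf[OF uv(2)]
          show "Measurable.pred MM (\<lambda>Z. (f Z u \<le> f Z v) = ((u,v) \<in> R))" by measurable
        qed
        then show ?thesis by measurable
      qed
      finally show ?thesis .
    qed
    then show "(\<lambda>Z. order_by V (f Z)) -` {a} \<inter> space MM \<in> sets MM"
      unfolding eq using fR by (intro sets.finite_UN) auto
  qed
qed

lemma measurable_W:
  assumes fV: "finite V"
    and mZ: "\<And>j v. j \<in> {1..k} \<Longrightarrow> v \<in> V \<Longrightarrow> (\<lambda>Z. Z (j, v)) \<in> borel_measurable MM"
  shows "\<forall>v\<in>V. (\<lambda>Z. mwu_weights V E lam R eta Z k v) \<in> borel_measurable MM"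
  using mZ
proof (induction k)
  case 0 then show ?case by simp
next
  case (Suc k)
  then have IH: "\<forall>v\<in>V. (\<lambda>Z. mwu_weights V E lam R eta Z k v) \<in> borel_measurable MM" by auto
  have nm: "(\<lambda>Z. normalize V (mwu_weights V E lam R eta Z k) v) \<in> borel_measurable MM" if "v \<in> V" for v
    unfolding normalize_def using IH that by (intro borel_measurable_divide borel_measurable_sum) auto
  have om: "(\<lambda>Z. ordk V E lam R eta Z k) \<in> measurable MM (count_space (LL V))"
    unfolding ordk_def by (rule measurable_order_by[OF fV nm])
  have mmm: "(\<lambda>Z. mm V E lam R eta Z k v) \<in> borel_measurable MM" for v
  proof -
    have "(\<lambda>Z. (\<lambda>s. (1 / R) * (1 - real (qdeg E s v) / lam)) (ordk V E lam R eta Z k)) \<in> borel_measurable MM"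
      by (rule measurable_compose[OF om borel_measurable_count_space])
    then show ?thesis by (simp add: mm_def)
  qed
  show ?case
  proof
    fix v assume v: "v \<in> V"
    have z: "(\<lambda>Z. Z (Suc k, v)) \<in> borel_measurable MM" using Suc.prems v by auto
    have w: "(\<lambda>Z. mwu_weights V E lam R eta Z k v) \<in> borel_measurable MM" using IH v by auto
    show "(\<lambda>Z. mwu_weights V E lam R eta Z (Suc k) v) \<in> borel_measurable MM"
      unfolding W_Suc using w mmm[of v] z
      by (intro borel_measurable_times borel_measurable_exp borel_measurable_add measurable_const) auto
  qed
qed



lemma exp_neg_le_quad:
  fixes y :: real assumes "\<bar>y\<bar> \<le> 1"
  shows "exp (- y) \<le> 1 - y + y\<^sup>2"
proof (cases "y \<le> 0")
  case True
  then show ?thesis using exp_bound[of "- y"] assms by simp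
next
  case False
  then have y: "0 < y" "y \<le> 1" using assms by auto
  have "exp (- y) = 1 / exp y" by (simp add: exp_minus field_simps)
  also have "\<dots> \<le> 1 / (1 + y)" using y exp_ge_add_one_self[of y]
    by (intro divide_left_mono) auto
  also have "\<dots> \<le> 1 - y + y\<^sup>2"
  proof -
    have "1 \<le> (1 + y) * (1 - y + y\<^sup>2)" using y by (simp add: power2_eq_square algebra_simps)
    then show ?thesis using y by (simp add: divide_le_eq mult.commute)
  qed
  finally show ?thesis .
qed

lemma step_det_bound:
  fixes p m :: "'a \<Rightarrow> real" and eta :: real
  assumes fV: "finite V" and pnn: "\<forall>v\<in>V. p v \<ge> 0" and ps: "(\<Sum>v\<in>V. p v) = 1"
    and mb: "\<forall>v\<in>V. \<bar>m v\<bar> \<le> 1" and eta: "0 \<le> eta" "eta \<le> 1"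
  shows "(\<Sum>v\<in>V. p v * exp (- eta * m v)) \<le> exp (- eta * (\<Sum>v\<in>V. p v * m v) + eta\<^sup>2)"
proof -
  have "(\<Sum>v\<in>V. p v * exp (- eta * m v)) \<le> (\<Sum>v\<in>V. p v * (1 - eta * m v + eta\<^sup>2))"
  proof (rule sum_mono)
    fix v assume v: "v \<in> V"
    have am: "\<bar>eta * m v\<bar> \<le> 1" using mb v eta by (simp add: abs_mult mult_le_one)
    have m2: "(m v)\<^sup>2 \<le> 1" using mb v by (simp add: abs_square_le_1)
    have "(eta * m v)\<^sup>2 = eta\<^sup>2 * (m v)\<^sup>2" by (simp add: power_mult_distrib)
    also have "\<dots> \<le> eta\<^sup>2 * 1" using m2 by (intro mult_left_mono) auto
    finally have sq: "(eta * m v)\<^sup>2 \<le> eta\<^sup>2" by simp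
    have "exp (- (eta * m v)) \<le> 1 - eta * m v + (eta * m v)\<^sup>2" by (rule exp_neg_le_quad[OF am])
    then have "exp (- eta * m v) \<le> 1 - eta * m v + eta\<^sup>2" using sq by simp
    moreover have "0 \<le> p v" using pnn v by auto
    ultimately show "p v * exp (- eta * m v) \<le> p v * (1 - eta * m v + eta\<^sup>2)"
      by (rule mult_left_mono)
  qed
  also have "\<dots> = (\<Sum>v\<in>V. p v) * (1 + eta\<^sup>2) - eta * (\<Sum>v\<in>V. p v * m v)"
  proof -
    have "(\<Sum>v\<in>V. p v * (1 - eta * m v + eta\<^sup>2)) = (\<Sum>v\<in>V. p v * (1 + eta\<^sup>2) - eta * (p v * m v))"
      by (intro sum.cong) (auto simp: algebra_simps)
    also have "\<dots> = (\<Sum>v\<in>V. p v) * (1 + eta\<^sup>2) - eta * (\<Sum>v\<in>V. p v * m v)"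
      by (simp add: sum_subtractf sum_distrib_left sum_distrib_right)
    finally show ?thesis .
  qed
  also have "\<dots> = 1 - eta * (\<Sum>v\<in>V. p v * m v) + eta\<^sup>2" using ps by simp
  also have "\<dots> \<le> exp (- eta * (\<Sum>v\<in>V. p v * m v) + eta\<^sup>2)"
    using exp_ge_add_one_self[of "- eta * (\<Sum>v\<in>V. p v * m v) + eta\<^sup>2"] by (simp add: algebra_simps)
  finally show ?thesis .
qed

context
  fixes nu :: real assumes nu: "nu > 0"
begin

lemma prob_N: "prob_space (density lborel (normal_density 0 nu))"
  using prob_space_normal_density[OF nu] .

lemma nn_integral_normal_density: "(\<integral>\<^sup>+x. ennreal (normal_density mu nu x) \<partial>lborel) = 1"
  using nn_integral_eq_integral[OF integrable_normal_density[OF nu]] integral_normal_density[OF nu]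
  by simp

lemma mgf_N:
  "(\<integral>\<^sup>+x. ennreal (exp (c * x)) \<partial>density lborel (normal_density 0 nu)) = ennreal (exp (c\<^sup>2 * nu\<^sup>2 / 2))"
proof -
  have eq: "normal_density 0 nu x * exp (c * x) = exp (c\<^sup>2 * nu\<^sup>2 / 2) * normal_density (c * nu\<^sup>2) nu x" for x
  proof -
    have "- x\<^sup>2 / (2 * nu\<^sup>2) + c * x = c\<^sup>2 * nu\<^sup>2 / 2 + (- (x - c * nu\<^sup>2)\<^sup>2 / (2 * nu\<^sup>2))"
    proof -
      have n0: "nu\<^sup>2 \<noteq> 0" using nu by simp
      have "(x - c * nu\<^sup>2)\<^sup>2 = x\<^sup>2 - 2 * c * x * nu\<^sup>2 + c\<^sup>2 * nu\<^sup>2 * nu\<^sup>2"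
        by (simp add: power2_diff power_mult_distrib algebra_simps power2_eq_square)
      then show ?thesis using n0 by (simp add: add_divide_distrib diff_divide_distrib)
    qed
    then have "exp (- x\<^sup>2 / (2 * nu\<^sup>2)) * exp (c * x) = exp (c\<^sup>2 * nu\<^sup>2 / 2) * exp (- (x - c * nu\<^sup>2)\<^sup>2 / (2 * nu\<^sup>2))"
      by (simp flip: exp_add)
    then show ?thesis unfolding normal_density_def by (simp add: algebra_simps)
  qed
  have "(\<integral>\<^sup>+x. ennreal (exp (c * x)) \<partial>density lborel (normal_density 0 nu))
      = (\<integral>\<^sup>+x. ennreal (normal_density 0 nu x) * ennreal (exp (c * x)) \<partial>lborel)"
    by (subst nn_integral_density) auto
  also have "\<dots> = (\<integral>\<^sup>+x. ennreal (exp (c\<^sup>2 * nu\<^sup>2 / 2)) * ennreal (normal_density (c * nu\<^sup>2) nu x) \<partial>lborel)"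
    by (intro nn_integral_cong) (simp add: eq flip: ennreal_mult)
  also have "\<dots> = ennreal (exp (c\<^sup>2 * nu\<^sup>2 / 2))"
    by (subst nn_integral_cmult) (auto simp: nn_integral_normal_density)
  finally show ?thesis .
qed

lemma integrable_N: "integrable (density lborel (normal_density 0 nu)) (\<lambda>x. x)"
  and integral_N: "(\<integral>x. x \<partial>density lborel (normal_density 0 nu)) = 0"
proof -
  show "integrable (density lborel (normal_density 0 nu)) (\<lambda>x. x)"
    by (subst integrable_density) (auto simp: integrable_normal_moment_nz_1[OF nu])
  show "(\<integral>x. x \<partial>density lborel (normal_density 0 nu)) = 0"
    by (subst integral_density) (auto simp: integral_normal_moment_nz_1[OF nu])
qed

end



lemma inner_integral:
  fixes a :: "'a \<Rightarrow> real"
  assumes fV: "finite V" and a: "\<forall>v\<in>V. a v \<ge> 0" and nu: "nu > 0"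
  shows "(\<integral>\<^sup>+y. ennreal (\<Sum>v\<in>V. a v * exp (- eta * y (i, v)))
            \<partial>PiM ({i} \<times> V) (\<lambda>_. density lborel (normal_density 0 nu)))
         = ennreal ((\<Sum>v\<in>V. a v) * exp (eta\<^sup>2 * nu\<^sup>2 / 2))"
proof -
  let ?N = "density lborel (normal_density 0 nu)"
  let ?P = "PiM ({i} \<times> V) (\<lambda>_. ?N)"
  have comp: "(\<integral>\<^sup>+y. ennreal (exp (- eta * y (i, v))) \<partial>?P) = ennreal (exp (eta\<^sup>2 * nu\<^sup>2 / 2))"
    if v: "v \<in> V" for v
  proof -
    have d: "distr ?P ?N (\<lambda>y. y (i, v)) = ?N"
      using v prob_N[OF nu] by (intro distr_PiM_component) auto
    have "(\<integral>\<^sup>+y. ennreal (exp (- eta * y (i, v))) \<partial>?P) = (\<integral>\<^sup>+t. ennreal (exp (- eta * t)) \<partial>distr ?P ?N (\<lambda>y. y (i, v)))"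
      using v by (subst nn_integral_distr) (auto intro!: measurable_component_singleton)
    also have "\<dots> = ennreal (exp ((- eta)\<^sup>2 * nu\<^sup>2 / 2))" unfolding d by (rule mgf_N[OF nu])
    finally show ?thesis by simp
  qed
  have "(\<integral>\<^sup>+y. ennreal (\<Sum>v\<in>V. a v * exp (- eta * y (i, v))) \<partial>?P)
      = (\<integral>\<^sup>+y. (\<Sum>v\<in>V. ennreal (a v) * ennreal (exp (- eta * y (i, v)))) \<partial>?P)"
  proof (intro nn_integral_cong)
    fix y
    have "ennreal (\<Sum>v\<in>V. a v * exp (- eta * y (i, v))) = (\<Sum>v\<in>V. ennreal (a v * exp (- eta * y (i, v))))"
      using a by (intro sum_ennreal[symmetric]) auto
    also have "\<dots> = (\<Sum>v\<in>V. ennreal (a v) * ennreal (exp (- eta * y (i, v))))"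
      using a by (intro sum.cong refl) (simp add: ennreal_mult)
    finally show "ennreal (\<Sum>v\<in>V. a v * exp (- eta * y (i, v))) = (\<Sum>v\<in>V. ennreal (a v) * ennreal (exp (- eta * y (i, v))))" .
  qed
  also have "\<dots> = (\<Sum>v\<in>V. (\<integral>\<^sup>+y. ennreal (a v) * ennreal (exp (- eta * y (i, v))) \<partial>?P))"
    by (rule nn_integral_sum) measurable
  also have "\<dots> = (\<Sum>v\<in>V. ennreal (a v) * ennreal (exp (eta\<^sup>2 * nu\<^sup>2 / 2)))"
  proof (intro sum.cong refl)
    fix v assume v: "v \<in> V"
    show "(\<integral>\<^sup>+y. ennreal (a v) * ennreal (exp (- eta * y (i, v))) \<partial>?P) = ennreal (a v) * ennreal (exp (eta\<^sup>2 * nu\<^sup>2 / 2))"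
    proof -
      have m: "(\<lambda>y. ennreal (exp (- eta * y (i, v)))) \<in> borel_measurable ?P"
        apply measurable using v by simp
      show ?thesis by (subst nn_integral_cmult[OF m]) (use comp[OF v] in simp)
    qed
  qed
  also have "\<dots> = ennreal ((\<Sum>v\<in>V. a v) * exp (eta\<^sup>2 * nu\<^sup>2 / 2))"
    using a by (simp add: sum_distrib_right flip: ennreal_mult)
  finally show ?thesis .
qed

lemma measurable_ordk:
  assumes fV: "finite V" and jk: "j \<le> k"
    and mZ: "\<And>j v. j \<in> {1..k} \<Longrightarrow> v \<in> V \<Longrightarrow> (\<lambda>Z. Z (j, v)) \<in> borel_measurable MM"
  shows "(\<lambda>Z. ordk V E lam R eta Z j) \<in> measurable MM (count_space (LL V))"
    and "(\<lambda>Z. mm V E lam R eta Z j v) \<in> borel_measurable MM"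
    and "(\<lambda>Z. XX V E lam R eta Z j) \<in> borel_measurable MM"
    and "(\<lambda>Z. \<Sum>v\<in>V. mwu_weights V E lam R eta Z j v) \<in> borel_measurable MM"
proof -
  have W: "\<forall>v\<in>V. (\<lambda>Z. mwu_weights V E lam R eta Z j v) \<in> borel_measurable MM"
    using jk by (intro measurable_W[OF fV]) (auto intro: mZ)
  have nm: "(\<lambda>Z. normalize V (mwu_weights V E lam R eta Z j) v) \<in> borel_measurable MM" if "v \<in> V" for v
    unfolding normalize_def using W that by (intro borel_measurable_divide borel_measurable_sum) auto
  show om: "(\<lambda>Z. ordk V E lam R eta Z j) \<in> measurable MM (count_space (LL V))"
    unfolding ordk_def by (rule measurable_order_by[OF fV nm])
  have mmm: "(\<lambda>Z. mm V E lam R eta Z j v) \<in> borel_measurable MM" for v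
  proof -
    have "(\<lambda>Z. (\<lambda>s. (1 / R) * (1 - real (qdeg E s v) / lam)) (ordk V E lam R eta Z j)) \<in> borel_measurable MM"
      by (rule measurable_compose[OF om borel_measurable_count_space])
    then show ?thesis by (simp add: mm_def)
  qed
  then show "(\<lambda>Z. mm V E lam R eta Z j v) \<in> borel_measurable MM" .
  show "(\<lambda>Z. XX V E lam R eta Z j) \<in> borel_measurable MM"
    unfolding XX_def using nm mmm by (intro borel_measurable_sum borel_measurable_times) auto
  show "(\<lambda>Z. \<Sum>v\<in>V. mwu_weights V E lam R eta Z j v) \<in> borel_measurable MM"
    using W by (intro borel_measurable_sum) auto
qed

lemma coord_meas:
  assumes "(j, v) \<in> I"
  shows "(\<lambda>Z. Z (j, v)) \<in> borel_measurable (PiM I (\<lambda>_. density lborel (normal_density 0 nu)))"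
  apply measurable using assms by simp

lemma coord_int:
  assumes "i \<in> I" and nu: "nu > 0"
  shows "integrable (PiM I (\<lambda>_. density lborel (normal_density 0 nu))) (\<lambda>Z. Z i)"
    and "(\<integral>Z. Z i \<partial>PiM I (\<lambda>_. density lborel (normal_density 0 nu))) = 0"
proof -
  let ?N = "density lborel (normal_density 0 nu)"
  let ?P = "PiM I (\<lambda>_. ?N)"
  have d: "distr ?P ?N (\<lambda>y. y i) = ?N"
    using assms prob_N[OF nu] by (intro distr_PiM_component) auto
  have m: "(\<lambda>y. y i) \<in> measurable ?P ?N" using assms by (intro measurable_component_singleton)
  have "integrable (distr ?P ?N (\<lambda>y. y i)) (\<lambda>x. x)" unfolding d by (rule integrable_N[OF nu])
  then show "integrable ?P (\<lambda>Z. Z i)" by (subst (asm) integrable_distr_eq[OF m]) auto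
  have "(\<integral>x. x \<partial>distr ?P ?N (\<lambda>y. y i)) = 0" unfolding d by (rule integral_N[OF nu])
  then show "(\<integral>Z. Z i \<partial>?P) = 0" by (subst (asm) integral_distr[OF m]) auto
qed

context
  fixes V :: "'a::linorder set" and E :: "'a set set" and lam R eta nu :: real
  assumes fV: "finite V" and Vne: "V \<noteq> {}" and nu: "nu > 0" and eta0: "0 \<le> eta" and eta1: "eta \<le> 1"
    and mb: "\<And>Z k v. v \<in> V \<Longrightarrow> \<bar>mm V E lam R eta Z k v\<bar> \<le> 1"
begin

definition HH where
  "HH Z k = (\<Sum>v\<in>V. mwu_weights V E lam R eta Z k v) * exp (eta * (\<Sum>j<k. XX V E lam R eta Z j))"

lemma HH_meas: "(\<lambda>Z. HH Z k) \<in> borel_measurable (PiM ({1..k} \<times> V) (\<lambda>_. density lborel (normal_density 0 nu)))"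
proof -
  let ?P = "PiM ({1..k} \<times> V) (\<lambda>_. density lborel (normal_density 0 nu))"
  have mZ: "\<And>j v. j \<in> {1..k} \<Longrightarrow> v \<in> V \<Longrightarrow> (\<lambda>Z. Z (j, v)) \<in> borel_measurable ?P"
    by (rule coord_meas) auto
  have x: "(\<lambda>Z. XX V E lam R eta Z j) \<in> borel_measurable ?P" if "j < k" for j
    using that by (intro measurable_ordk(3)[OF fV _ mZ]) auto
  have w: "(\<lambda>Z. \<Sum>v\<in>V. mwu_weights V E lam R eta Z k v) \<in> borel_measurable ?P"
    by (intro measurable_ordk(4)[OF fV _ mZ]) auto
  have s: "(\<lambda>Z. \<Sum>j<k. XX V E lam R eta Z j) \<in> borel_measurable ?P"
    using x by (intro borel_measurable_sum) auto
  show ?thesis unfolding HH_def using w s by measurable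
qed

lemma HH_merge:
  assumes eq: "\<forall>j\<in>{1..k}. \<forall>v\<in>V. Z (j, v) = x (j, v)"
  shows "HH Z (Suc k) = (\<Sum>v\<in>V. (mwu_weights V E lam R eta x k v * exp (- eta * mm V E lam R eta x k v)
            * exp (eta * (\<Sum>j<Suc k. XX V E lam R eta x j))) * exp (- eta * Z (Suc k, v)))"
proof -
  have d: "XX V E lam R eta Z j = XX V E lam R eta x j" if "j < Suc k" for j
    using that eq by (intro dep_all(3)[OF fV]) auto
  have w: "mwu_weights V E lam R eta Z k v = mwu_weights V E lam R eta x k v" if "v \<in> V" for v
    using W_dep[OF fV eq] that by auto
  have m: "mm V E lam R eta Z k = mm V E lam R eta x k"
    using eq by (intro dep_all(2)[OF fV]) auto
  have s1: "(\<Sum>j<Suc k. XX V E lam R eta Z j) = (\<Sum>j<Suc k. XX V E lam R eta x j)"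
    using d by (intro sum.cong) auto
  have s2: "(\<Sum>v\<in>V. mwu_weights V E lam R eta Z (Suc k) v) =
      (\<Sum>v\<in>V. mwu_weights V E lam R eta x k v * exp (- eta * (mm V E lam R eta x k v + Z (Suc k, v))))"
    unfolding W_Suc using w m by (intro sum.cong) auto
  have "HH Z (Suc k) = (\<Sum>v\<in>V. mwu_weights V E lam R eta x k v * exp (- eta * (mm V E lam R eta x k v + Z (Suc k, v))))
        * exp (eta * (\<Sum>j<Suc k. XX V E lam R eta x j))"
    by (simp only: HH_def s1 s2)
  also have "\<dots> = (\<Sum>v\<in>V. (mwu_weights V E lam R eta x k v * exp (- eta * mm V E lam R eta x k v)
            * exp (eta * (\<Sum>j<Suc k. XX V E lam R eta x j))) * exp (- eta * Z (Suc k, v)))"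
    unfolding sum_distrib_right
  proof (intro sum.cong refl)
    fix v
    have "exp (- eta * (mm V E lam R eta x k v + Z (Suc k, v))) = exp (- eta * mm V E lam R eta x k v) * exp (- eta * Z (Suc k, v))"
      by (simp add: algebra_simps flip: exp_add)
    then show "mwu_weights V E lam R eta x k v * exp (- eta * (mm V E lam R eta x k v + Z (Suc k, v))) * exp (eta * (\<Sum>j<Suc k. XX V E lam R eta x j))
      = mwu_weights V E lam R eta x k v * exp (- eta * mm V E lam R eta x k v) * exp (eta * (\<Sum>j<Suc k. XX V E lam R eta x j)) * exp (- eta * Z (Suc k, v))"
      by simp
  qed
  finally show ?thesis .
qed

lemma HH_sum_bound:
  "(\<Sum>v\<in>V. mwu_weights V E lam R eta x k v * exp (- eta * mm V E lam R eta x k v)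
            * exp (eta * (\<Sum>j<Suc k. XX V E lam R eta x j))) \<le> exp (eta\<^sup>2) * HH x k"
proof -
  let ?W = "mwu_weights V E lam R eta x k"
  let ?m = "mm V E lam R eta x k"
  define q where "q = normalize V ?W"
  define C where "C = exp (eta * (\<Sum>j<Suc k. XX V E lam R eta x j))"
  define Phi where "Phi = (\<Sum>v\<in>V. ?W v)"
  have Phi: "Phi > 0" unfolding Phi_def using fV Vne by (intro sum_pos) (auto intro: W_pos)
  have Wp: "?W v = Phi * q v" for v using Phi by (simp add: normalize_def Phi_def q_def)
  have pn: "\<forall>v\<in>V. q v \<ge> 0" "(\<Sum>v\<in>V. q v) = 1"
  proof -
    have "\<forall>v\<in>V. ?W v > 0" using W_pos by blast
    from normalize_pos[OF fV Vne this] show "\<forall>v\<in>V. q v \<ge> 0" "(\<Sum>v\<in>V. q v) = 1" by (auto simp: q_def)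
  qed
  have XXq: "XX V E lam R eta x k = (\<Sum>v\<in>V. q v * ?m v)" by (simp add: XX_def q_def)
  have sb: "(\<Sum>v\<in>V. q v * exp (- eta * ?m v)) \<le> exp (- eta * XX V E lam R eta x k + eta\<^sup>2)"
    unfolding XXq using step_det_bound[OF fV pn(1) pn(2) _ eta0 eta1] mb by auto
  have "(\<Sum>v\<in>V. ?W v * exp (- eta * ?m v) * C) = (\<Sum>v\<in>V. (Phi * C) * (q v * exp (- eta * ?m v)))"
    by (intro sum.cong refl) (simp add: Wp)
  also have "\<dots> = Phi * C * (\<Sum>v\<in>V. q v * exp (- eta * ?m v))"
    by (simp add: sum_distrib_left)
  also have "\<dots> \<le> Phi * C * exp (- eta * XX V E lam R eta x k + eta\<^sup>2)"
    using Phi sb by (intro mult_left_mono) (auto simp: C_def)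
  also have "\<dots> = exp (eta\<^sup>2) * HH x k"
    unfolding HH_def Phi_def[symmetric] C_def by (simp add: algebra_simps flip: exp_add)
  finally show ?thesis by (simp add: C_def)
qed


lemma HH_nonneg: "HH Z k \<ge> 0"
  unfolding HH_def by (intro mult_nonneg_nonneg sum_nonneg less_imp_le[OF W_pos]) auto

lemma HH_bound:
  "(\<integral>\<^sup>+Z. ennreal (HH Z k) \<partial>PiM ({1..k} \<times> V) (\<lambda>_. density lborel (normal_density 0 nu)))
     \<le> ennreal (real (card V) * exp (real k * (eta\<^sup>2 * nu\<^sup>2 / 2 + eta\<^sup>2)))"
proof (induction k)
  case 0
  let ?P = "PiM ({} :: (nat \<times> 'a) set) (\<lambda>_. density lborel (normal_density 0 nu))"
  interpret P0: prob_space ?P by (rule prob_space_PiM) (rule prob_N[OF nu])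
  have "HH Z 0 = real (card V)" for Z by (simp add: HH_def)
  then show ?case by (simp add: P0.emeasure_space_1)
next
  case (Suc k)
  let ?N = "density lborel (normal_density 0 nu)"
  let ?K = "{1..k} \<times> V" and ?J = "{Suc k} \<times> V"
  let ?c = "eta\<^sup>2 * nu\<^sup>2 / 2 + eta\<^sup>2"
  interpret PS: product_prob_space "\<lambda>_::(nat \<times> 'a). ?N"
    by (rule product_prob_spaceI) (rule prob_N[OF nu])
  have KJ: "{1..Suc k} \<times> V = ?K \<union> ?J" by auto
  have disj: "?K \<inter> ?J = {}" by auto
  have fin: "finite ?K" "finite ?J" using fV by auto
  have mH: "(\<lambda>Z. ennreal (HH Z (Suc k))) \<in> borel_measurable (PiM (?K \<union> ?J) (\<lambda>_. ?N))"
    using HH_meas[of "Suc k"] unfolding KJ by measurable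
  have "(\<integral>\<^sup>+Z. ennreal (HH Z (Suc k)) \<partial>PiM ({1..Suc k} \<times> V) (\<lambda>_. ?N))
      = (\<integral>\<^sup>+x. (\<integral>\<^sup>+y. ennreal (HH (merge ?K ?J (x, y)) (Suc k)) \<partial>PiM ?J (\<lambda>_. ?N)) \<partial>PiM ?K (\<lambda>_. ?N))"
    unfolding KJ by (rule PS.product_nn_integral_fold[OF disj fin mH])
  also have "\<dots> = (\<integral>\<^sup>+x. ennreal ((\<Sum>v\<in>V. mwu_weights V E lam R eta x k v * exp (- eta * mm V E lam R eta x k v)
            * exp (eta * (\<Sum>j<Suc k. XX V E lam R eta x j))) * exp (eta\<^sup>2 * nu\<^sup>2 / 2)) \<partial>PiM ?K (\<lambda>_. ?N))"
  proof (intro nn_integral_cong)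
    fix x
    have "(\<integral>\<^sup>+y. ennreal (HH (merge ?K ?J (x, y)) (Suc k)) \<partial>PiM ?J (\<lambda>_. ?N))
        = (\<integral>\<^sup>+y. ennreal (\<Sum>v\<in>V. (mwu_weights V E lam R eta x k v * exp (- eta * mm V E lam R eta x k v)
            * exp (eta * (\<Sum>j<Suc k. XX V E lam R eta x j))) * exp (- eta * y (Suc k, v))) \<partial>PiM ?J (\<lambda>_. ?N))"
    proof (intro nn_integral_cong)
      fix y
      have "\<forall>j\<in>{1..k}. \<forall>v\<in>V. merge ?K ?J (x, y) (j, v) = x (j, v)" using disj by simp
      from HH_merge[OF this] show "ennreal (HH (merge ?K ?J (x, y)) (Suc k)) = ennreal (\<Sum>v\<in>V. (mwu_weights V E lam R eta x k v * exp (- eta * mm V E lam R eta x k v)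
            * exp (eta * (\<Sum>j<Suc k. XX V E lam R eta x j))) * exp (- eta * y (Suc k, v)))"
        using disj by (simp cong: sum.cong)
    qed
    also have "\<dots> = ennreal ((\<Sum>v\<in>V. mwu_weights V E lam R eta x k v * exp (- eta * mm V E lam R eta x k v)
            * exp (eta * (\<Sum>j<Suc k. XX V E lam R eta x j))) * exp (eta\<^sup>2 * nu\<^sup>2 / 2))"
      by (rule inner_integral[OF fV _ nu]) (auto intro!: mult_nonneg_nonneg less_imp_le[OF W_pos])
    finally show "(\<integral>\<^sup>+y. ennreal (HH (merge ?K ?J (x, y)) (Suc k)) \<partial>PiM ?J (\<lambda>_. ?N)) = ennreal ((\<Sum>v\<in>V. mwu_weights V E lam R eta x k v * exp (- eta * mm V E lam R eta x k v)
            * exp (eta * (\<Sum>j<Suc k. XX V E lam R eta x j))) * exp (eta\<^sup>2 * nu\<^sup>2 / 2))" .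
  qed
  also have "\<dots> \<le> (\<integral>\<^sup>+x. ennreal (exp ?c) * ennreal (HH x k) \<partial>PiM ?K (\<lambda>_. ?N))"
  proof (intro nn_integral_mono)
    fix x
    have "(\<Sum>v\<in>V. mwu_weights V E lam R eta x k v * exp (- eta * mm V E lam R eta x k v)
            * exp (eta * (\<Sum>j<Suc k. XX V E lam R eta x j))) * exp (eta\<^sup>2 * nu\<^sup>2 / 2)
          \<le> exp (eta\<^sup>2) * HH x k * exp (eta\<^sup>2 * nu\<^sup>2 / 2)"
      by (intro mult_right_mono HH_sum_bound) auto
    also have "\<dots> = exp ?c * HH x k" by (simp add: algebra_simps flip: exp_add)
    finally show "ennreal ((\<Sum>v\<in>V. mwu_weights V E lam R eta x k v * exp (- eta * mm V E lam R eta x k v)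
            * exp (eta * (\<Sum>j<Suc k. XX V E lam R eta x j))) * exp (eta\<^sup>2 * nu\<^sup>2 / 2))
          \<le> ennreal (exp ?c) * ennreal (HH x k)"
      using HH_nonneg[of x k] by (subst ennreal_mult[symmetric]) (auto intro: ennreal_leI)
  qed
  also have "\<dots> = ennreal (exp ?c) * (\<integral>\<^sup>+x. ennreal (HH x k) \<partial>PiM ?K (\<lambda>_. ?N))"
    using HH_meas[of k] by (subst nn_integral_cmult) auto
  also have "\<dots> \<le> ennreal (exp ?c) * ennreal (real (card V) * exp (real k * ?c))"
    by (intro mult_left_mono Suc.IH) auto
  also have "\<dots> = ennreal (real (card V) * exp (real (Suc k) * ?c))"
    by (simp add: ennreal_mult[symmetric] algebra_simps flip: exp_add)
  finally show ?case .
qed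


lemma XX_abs: "\<bar>XX V E lam R eta Z k\<bar> \<le> 1"
proof -
  let ?W = "mwu_weights V E lam R eta Z k"
  have "\<forall>v\<in>V. ?W v > 0" using W_pos by blast
  note pn = normalize_pos[OF fV Vne this]
  have "\<bar>XX V E lam R eta Z k\<bar> \<le> (\<Sum>v\<in>V. \<bar>normalize V ?W v * mm V E lam R eta Z k v\<bar>)"
    unfolding XX_def by (rule sum_abs)
  also have "\<dots> \<le> (\<Sum>v\<in>V. normalize V ?W v)"
  proof (intro sum_mono)
    fix v assume v: "v \<in> V"
    have "\<bar>normalize V ?W v * mm V E lam R eta Z k v\<bar> = normalize V ?W v * \<bar>mm V E lam R eta Z k v\<bar>"
      using pn(1) v by (simp add: abs_mult)
    also have "\<dots> \<le> normalize V ?W v * 1" using pn(1) v mb[OF v] by (intro mult_left_mono) auto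
    finally show "\<bar>normalize V ?W v * mm V E lam R eta Z k v\<bar> \<le> normalize V ?W v" by simp
  qed
  finally show ?thesis using pn(2) by simp
qed

lemma exp_sum_ge:
  fixes a :: "'a \<Rightarrow> real"
  assumes "finite S" "S \<noteq> {}"
  shows "exp ((\<Sum>v\<in>S. a v) / real (card S)) \<le> (\<Sum>v\<in>S. exp (a v))"
proof -
  define mu where "mu = (\<Sum>v\<in>S. a v) / real (card S)"
  have c: "real (card S) > 0" using assms by (simp add: card_gt_0_iff)
  have le1: "(\<Sum>v\<in>S. exp mu * (1 + (a v - mu))) \<le> (\<Sum>v\<in>S. exp (a v))"
  proof (intro sum_mono)
    fix v
    have "exp mu * (1 + (a v - mu)) \<le> exp mu * exp (a v - mu)"
      by (intro mult_left_mono exp_ge_add_one_self) auto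
    then show "exp mu * (1 + (a v - mu)) \<le> exp (a v)" by (simp flip: exp_add)
  qed
  have e2: "(\<Sum>v\<in>S. exp mu * (1 + (a v - mu))) = exp mu * (real (card S) + (\<Sum>v\<in>S. a v) - real (card S) * mu)"
    by (simp add: sum_distrib_left[symmetric] sum.distrib sum_subtractf algebra_simps)
  have e3: "real (card S) + (\<Sum>v\<in>S. a v) - real (card S) * mu = real (card S)"
    using c by (simp add: mu_def)
  have le2: "exp mu \<le> exp mu * real (card S)"
    using assms by (simp add: card_gt_0_iff Suc_le_eq)
  have "exp mu \<le> (\<Sum>v\<in>S. exp mu * (1 + (a v - mu)))" using le2 unfolding e2 e3 .
  then have "exp mu \<le> (\<Sum>v\<in>S. exp (a v))" using le1 by linarith
  then show ?thesis by (simp add: mu_def)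
qed

definition UU where
  "UU S Z k = (\<Sum>j<k. \<Sum>v\<in>S. Z (Suc j, v)) / real (card S)"

lemma HH_lower:
  assumes SV: "S \<subseteq> V" and Sne: "S \<noteq> {}"
    and hS: "\<And>Z j. (\<Sum>v\<in>S. mm V E lam R eta Z j v) \<le> 0"
  shows "exp (eta * (\<Sum>j<k. XX V E lam R eta Z j) - eta * UU S Z k) \<le> HH Z k"
proof -
  have fS: "finite S" using SV fV finite_subset by blast
  define a where "a v = - eta * (\<Sum>j<k. mm V E lam R eta Z j v + Z (Suc j, v))" for v
  have Wa: "mwu_weights V E lam R eta Z k v = exp (a v)" for v by (simp add: W_closed a_def)
  have "(\<Sum>v\<in>S. a v) / real (card S)
      = - eta * (\<Sum>j<k. \<Sum>v\<in>S. mm V E lam R eta Z j v) / real (card S) - eta * UU S Z k"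
  proof -
    have "(\<Sum>v\<in>S. a v) = - eta * ((\<Sum>v\<in>S. \<Sum>j<k. mm V E lam R eta Z j v) + (\<Sum>v\<in>S. \<Sum>j<k. Z (Suc j, v)))"
      unfolding a_def by (simp add: sum_negf sum.distrib flip: sum_distrib_left)
    also have "\<dots> = - eta * ((\<Sum>j<k. \<Sum>v\<in>S. mm V E lam R eta Z j v) + (\<Sum>j<k. \<Sum>v\<in>S. Z (Suc j, v)))"
      by (simp add: sum.swap[of _ S])
    moreover have cS: "real (card S) > 0" using fS Sne by (simp add: card_gt_0_iff)
    ultimately show ?thesis unfolding UU_def by (simp add: field_simps)
  qed
  also have "\<dots> \<ge> - eta * UU S Z k"
  proof -
    have "(\<Sum>j<k. \<Sum>v\<in>S. mm V E lam R eta Z j v) \<le> 0" by (intro sum_nonpos hS)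
    then have "- eta * (\<Sum>j<k. \<Sum>v\<in>S. mm V E lam R eta Z j v) \<ge> 0"
      using eta0 by (simp add: mult_nonneg_nonpos)
    then have "- eta * (\<Sum>j<k. \<Sum>v\<in>S. mm V E lam R eta Z j v) / real (card S) \<ge> 0"
      by (intro divide_nonneg_nonneg) auto
    then show ?thesis by simp
  qed
  finally have mu: "- eta * UU S Z k \<le> (\<Sum>v\<in>S. a v) / real (card S)" .
  have "exp (- eta * UU S Z k) \<le> exp ((\<Sum>v\<in>S. a v) / real (card S))" using mu by simp
  also have "\<dots> \<le> (\<Sum>v\<in>S. exp (a v))" by (rule exp_sum_ge[OF fS Sne])
  also have "\<dots> \<le> (\<Sum>v\<in>V. exp (a v))" using SV fV by (intro sum_mono2) auto
  finally have "exp (- eta * UU S Z k) \<le> (\<Sum>v\<in>V. mwu_weights V E lam R eta Z k v)" by (simp add: Wa)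
  then have "exp (- eta * UU S Z k) * exp (eta * (\<Sum>j<k. XX V E lam R eta Z j)) \<le> HH Z k"
    unfolding HH_def by (intro mult_right_mono) auto
  then show ?thesis by (simp add: algebra_simps flip: exp_add)
qed


lemma expect_bound:
  assumes SV: "S \<subseteq> V" and Sne: "S \<noteq> {}"
    and hS: "\<And>Z j. (\<Sum>v\<in>S. mm V E lam R eta Z j v) \<le> 0"
  shows "integrable (PiM ({1..T} \<times> V) (\<lambda>_. density lborel (normal_density 0 nu))) (\<lambda>Z. \<Sum>j<T. XX V E lam R eta Z j)"
    and "eta * (\<integral>Z. (\<Sum>j<T. XX V E lam R eta Z j) \<partial>PiM ({1..T} \<times> V) (\<lambda>_. density lborel (normal_density 0 nu)))
          \<le> ln (real (card V)) + real T * (eta\<^sup>2 * nu\<^sup>2 / 2 + eta\<^sup>2)"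
proof -
  let ?N = "density lborel (normal_density 0 nu)"
  let ?P = "PiM ({1..T} \<times> V) (\<lambda>_. ?N)"
  interpret P: prob_space ?P by (rule prob_space_PiM) (rule prob_N[OF nu])
  have fS: "finite S" using SV fV finite_subset by blast
  have mZ: "\<And>j v. j \<in> {1..T} \<Longrightarrow> v \<in> V \<Longrightarrow> (\<lambda>Z. Z (j, v)) \<in> borel_measurable ?P"
    by (rule coord_meas) auto
  define XS where "XS Z = (\<Sum>j<T. XX V E lam R eta Z j)" for Z
  define Wf where "Wf Z = eta * XS Z - eta * UU S Z T" for Z
  define C where "C = real (card V) * exp (real T * (eta\<^sup>2 * nu\<^sup>2 / 2 + eta\<^sup>2))"
  have Cpos: "C > 0" using fV Vne by (simp add: C_def card_gt_0_iff)
  have XSm: "XS \<in> borel_measurable ?P"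
    unfolding XS_def by (intro borel_measurable_sum measurable_ordk(3)[OF fV _ mZ]) auto
  have XSb: "\<bar>XS Z\<bar> \<le> real T" for Z
  proof -
    have "\<bar>XS Z\<bar> \<le> (\<Sum>j<T. \<bar>XX V E lam R eta Z j\<bar>)" unfolding XS_def by (rule sum_abs)
    also have "\<dots> \<le> (\<Sum>j<T. 1)" by (intro sum_mono XX_abs)
    finally show ?thesis by simp
  qed
  have XSi: "integrable ?P XS"
    using XSb by (intro P.integrable_const_bound[where B = "real T"] XSm) auto
  then show "integrable ?P (\<lambda>Z. \<Sum>j<T. XX V E lam R eta Z j)" by (simp add: XS_def[abs_def])
  have UUi: "integrable ?P (\<lambda>Z. UU S Z T)" and UU0: "(\<integral>Z. UU S Z T \<partial>?P) = 0"
  proof -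
    have ci: "integrable ?P (\<lambda>Z. Z (Suc j, v))" "(\<integral>Z. Z (Suc j, v) \<partial>?P) = 0" if "j < T" "v \<in> S" for j v
      using that SV by (intro coord_int[OF _ nu]; auto)+
    have "integrable ?P (\<lambda>Z. \<Sum>j<T. \<Sum>v\<in>S. Z (Suc j, v))"
      using ci(1) by (auto intro!: integrable_sum)
    then show "integrable ?P (\<lambda>Z. UU S Z T)" unfolding UU_def by (rule integrable_divide_zero)
    have "(\<integral>Z. (\<Sum>j<T. \<Sum>v\<in>S. Z (Suc j, v)) \<partial>?P) = 0"
    proof -
      have "(\<integral>Z. (\<Sum>j<T. \<Sum>v\<in>S. Z (Suc j, v)) \<partial>?P) = (\<Sum>j<T. \<integral>Z. (\<Sum>v\<in>S. Z (Suc j, v)) \<partial>?P)"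
        by (rule Bochner_Integration.integral_sum) (intro Bochner_Integration.integrable_sum ci(1); simp)
      also have "\<dots> = (\<Sum>j<T. \<Sum>v\<in>S. \<integral>Z. Z (Suc j, v) \<partial>?P)"
        by (intro sum.cong refl Bochner_Integration.integral_sum ci(1)) auto
      also have "\<dots> = 0" by (intro sum.neutral ballI ci(2)) auto
      finally show ?thesis .
    qed
    then show "(\<integral>Z. UU S Z T \<partial>?P) = 0" unfolding UU_def by simp
  qed
  have Wfi: "integrable ?P Wf" unfolding Wf_def using XSi UUi by auto
  have Wfm: "Wf \<in> borel_measurable ?P" using Wfi by (rule borel_measurable_integrable)
  have nnb: "(\<integral>\<^sup>+Z. ennreal (exp (Wf Z)) \<partial>?P) \<le> ennreal C"
  proof -
    have "(\<integral>\<^sup>+Z. ennreal (exp (Wf Z)) \<partial>?P) \<le> (\<integral>\<^sup>+Z. ennreal (HH Z T) \<partial>?P)"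
      by (intro nn_integral_mono ennreal_leI) (simp add: Wf_def XS_def HH_lower[OF SV Sne hS])
    also have "\<dots> \<le> ennreal C" unfolding C_def by (rule HH_bound)
    finally show ?thesis .
  qed
  have expi: "integrable ?P (\<lambda>Z. exp (Wf Z))"
    using le_less_trans[OF nnb ennreal_less_top] Wfm by (intro integrableI_nonneg) auto
  have expI: "(\<integral>Z. exp (Wf Z) \<partial>?P) \<le> C"
    using nnb Wfm Cpos by (subst integral_eq_nn_integral) (auto intro!: enn2real_leI)
  have pw: "Wf Z + 1 - ln C \<le> exp (Wf Z) / C" for Z
  proof -
    have "1 + (Wf Z - ln C) \<le> exp (Wf Z - ln C)" by (rule exp_ge_add_one_self)
    also have "\<dots> = exp (Wf Z) / C" using Cpos by (simp add: exp_diff)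
    finally show ?thesis by simp
  qed
  have "(\<integral>Z. Wf Z + 1 - ln C \<partial>?P) \<le> (\<integral>Z. exp (Wf Z) / C \<partial>?P)"
  proof (rule integral_mono)
    show "integrable ?P (\<lambda>Z. Wf Z + 1 - ln C)"
      using Wfi by (intro Bochner_Integration.integrable_diff Bochner_Integration.integrable_add P.integrable_const)
    show "integrable ?P (\<lambda>Z. exp (Wf Z) / C)" using expi by (rule integrable_divide_zero)
    show "\<And>Z. Z \<in> space ?P \<Longrightarrow> Wf Z + 1 - ln C \<le> exp (Wf Z) / C" using pw by auto
  qed
  also have "\<dots> = (\<integral>Z. exp (Wf Z) \<partial>?P) / C" by simp
  also have "\<dots> \<le> 1" using expI Cpos by simp
  finally have i1: "(\<integral>Z. Wf Z + 1 - ln C \<partial>?P) \<le> 1" .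
  have "(\<integral>Z. Wf Z + 1 - ln C \<partial>?P) = (\<integral>Z. Wf Z + 1 \<partial>?P) - (\<integral>Z. ln C \<partial>?P)"
    using Wfi by (intro Bochner_Integration.integral_diff Bochner_Integration.integrable_add P.integrable_const)
  also have "\<dots> = (\<integral>Z. Wf Z \<partial>?P) + (\<integral>Z. 1 \<partial>?P) - (\<integral>Z. ln C \<partial>?P)"
  proof -
    have "integrable ?P (\<lambda>Z. 1::real)" by (rule P.integrable_const)
    then show ?thesis using Wfi by (subst Bochner_Integration.integral_add) auto
  qed
  also have "\<dots> = (\<integral>Z. Wf Z \<partial>?P) + 1 - ln C"
  proof -
    have ps: "measure ?P (space ?P) = 1" by (rule P.prob_space)
    then show ?thesis by simp
  qed
  finally have "(\<integral>Z. Wf Z \<partial>?P) + 1 - ln C \<le> 1" using i1 by simp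
  moreover have "(\<integral>Z. Wf Z \<partial>?P) = eta * (\<integral>Z. XS Z \<partial>?P)"
    unfolding Wf_def using XSi UUi UU0 by simp
  moreover have "ln C = ln (real (card V)) + real T * (eta\<^sup>2 * nu\<^sup>2 / 2 + eta\<^sup>2)"
    using fV Vne by (simp add: C_def ln_mult card_gt_0_iff)
  ultimately show "eta * (\<integral>Z. (\<Sum>j<T. XX V E lam R eta Z j) \<partial>?P)
          \<le> ln (real (card V)) + real T * (eta\<^sup>2 * nu\<^sup>2 / 2 + eta\<^sup>2)"
    by (simp add: XS_def[abs_def])
qed

end



lemma XX_good:
  assumes G: "simple_graph V E" and Ene: "E \<noteq> {}"
    and lam_def: "lam = max_density V E" and Rpos: "R > 0"
  shows "0 \<le> XX V E lam R eta Z j"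
    and "dens E (best_prefix E (ordk V E lam R eta Z j)) < (1 - 2 * a) * lam \<Longrightarrow> XX V E lam R eta Z j > 2 * a / R"
proof -
  have fV: "finite V" and EV: "\<forall>e\<in>E. e \<subseteq> V \<and> card e = 2" using G by (auto simp: simple_graph_def)
  have E2: "\<forall>e\<in>E. card e = 2" using EV by auto
  have fE: "finite E"
  proof -
    have "E \<subseteq> Pow V" using EV by auto
    then show ?thesis using fV finite_subset by blast
  qed
  have Vne: "V \<noteq> {}" using Ene EV by (metis card.empty ex_in_conv subset_empty zero_neq_numeral)
  note lf = max_density_facts[OF G Ene, folded lam_def]
  let ?W = "mwu_weights V E lam R eta Z j"
  let ?p = "normalize V ?W"
  let ?s = "ordk V E lam R eta Z j"
  have "\<forall>v\<in>V. ?W v > 0" using W_pos by blast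
  note pn = normalize_pos[OF fV Vne this]
  have sp: "distinct ?s" "set ?s = V" "sorted_wrt (\<lambda>u v. ?p u \<ge> ?p v) ?s"
    unfolding ordk_def using order_by_props[OF fV] by auto
  have sne: "?s \<noteq> []" using sp Vne by auto
  define D where "D = dens E (best_prefix E ?s)"
  have pq: "(\<Sum>v\<in>V. ?p v * real (qdeg E ?s v)) \<le> D"
    unfolding D_def using pq_le_best[OF sp(1) sne sp(3) _ _ E2 fE] pn sp(2) by auto
  have Dl: "D \<le> lam"
  proof -
    obtain x where x: "x \<in> set ?s" "best_prefix E ?s = prefix_set ?s x"
      using best_prefix_spec[OF sne, of E] by blast
    have "prefix_set ?s x \<subseteq> V" using x sp(2)
      by (auto simp: prefix_set_def preceding_def dest: set_takeWhileD)
    moreover have "prefix_set ?s x \<noteq> {}" by (simp add: prefix_set_def)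
    ultimately show ?thesis unfolding D_def x(2) using lf(1) by blast
  qed
  have XXe: "XX V E lam R eta Z j = (1 / R) * (1 - (\<Sum>v\<in>V. ?p v * real (qdeg E ?s v)) / lam)"
  proof -
    have "XX V E lam R eta Z j = (\<Sum>v\<in>V. (1 / R) * ?p v - (1 / R) / lam * (?p v * real (qdeg E ?s v)))"
      unfolding XX_def mm_def by (intro sum.cong refl) (simp add: algebra_simps)
    also have "\<dots> = (1 / R) * (\<Sum>v\<in>V. ?p v) - (1 / R) / lam * (\<Sum>v\<in>V. ?p v * real (qdeg E ?s v))"
      by (simp add: sum_subtractf sum_distrib_left)
    also have "\<dots> = (1 / R) * (1 - (\<Sum>v\<in>V. ?p v * real (qdeg E ?s v)) / lam)"
      using pn(2) by (simp add: algebra_simps)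
    finally show ?thesis .
  qed
  have "(\<Sum>v\<in>V. ?p v * real (qdeg E ?s v)) / lam \<le> 1"
    using pq Dl lf(3) by (simp add: divide_le_eq)
  then show "0 \<le> XX V E lam R eta Z j" unfolding XXe using Rpos by simp
  assume bad: "dens E (best_prefix E ?s) < (1 - 2 * a) * lam"
  then have "(\<Sum>v\<in>V. ?p v * real (qdeg E ?s v)) / lam < 1 - 2 * a"
    using pq lf(3) by (simp add: D_def divide_less_eq)
  then have "1 - (\<Sum>v\<in>V. ?p v * real (qdeg E ?s v)) / lam > 2 * a" by simp
  then show "XX V E lam R eta Z j > 2 * a / R" unfolding XXe using Rpos
    by (simp add: divide_strict_right_mono)
qed

lemma mm_facts:
  assumes G: "simple_graph V E" and Ene: "E \<noteq> {}"
    and lam_def: "lam = max_density V E" and n_def: "n = card V"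
    and Rl: "R * lam = real n + tau" and tau: "tau > 0"
  shows "v \<in> V \<Longrightarrow> \<bar>mm V E lam R eta Z k v\<bar> \<le> 1"
    and "S \<subseteq> V \<Longrightarrow> S \<noteq> {} \<Longrightarrow> dens E S = lam \<Longrightarrow> (\<Sum>v\<in>S. mm V E lam R eta Z k v) \<le> 0"
proof -
  have fV: "finite V" and EV: "\<forall>e\<in>E. e \<subseteq> V \<and> card e = 2" using G by (auto simp: simple_graph_def)
  have E2: "\<forall>e\<in>E. card e = 2" using EV by auto
  note lf = max_density_facts[OF G Ene, folded lam_def]
  have lpos: "lam > 0" using lf(3) .
  have Rne: "R \<noteq> 0" using Rl tau by auto
  let ?s = "ordk V E lam R eta Z k"
  have sp: "distinct ?s" "set ?s = V"
    unfolding ordk_def using order_by_props[OF fV] by auto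
  have len: "length ?s = n" using sp n_def distinct_card by metis
  have mmf: "mm V E lam R eta Z k v = (lam - real (qdeg E ?s v)) / (real n + tau)" for v
  proof -
    have "mm V E lam R eta Z k v = (lam - real (qdeg E ?s v)) / (R * lam)"
      unfolding mm_def using lpos Rne by (simp add: field_simps)
    then show ?thesis using Rl by simp
  qed
  show "\<bar>mm V E lam R eta Z k v\<bar> \<le> 1" if v: "v \<in> V"
  proof -
    have q: "qdeg E ?s v \<le> n - 1" using qdeg_le[OF sp(1)] v sp(2) len by auto
    have n1: "n \<ge> 1" using v fV n_def by (metis One_nat_def Suc_leI card_gt_0_iff empty_iff)
    have "real (qdeg E ?s v) \<le> real n - 1" using q n1 by linarith
    moreover have "lam \<le> real n" using lf(4) n_def by simp
    ultimately have "\<bar>lam - real (qdeg E ?s v)\<bar> \<le> real n + tau" using lpos tau by linarith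
    moreover have pos: "real n + tau > 0" using tau by simp
    ultimately have "\<bar>lam - real (qdeg E ?s v)\<bar> / (real n + tau) \<le> 1" by simp
    moreover have "\<bar>(lam - real (qdeg E ?s v)) / (real n + tau)\<bar> = \<bar>lam - real (qdeg E ?s v)\<bar> / (real n + tau)"
      using pos by (simp add: abs_divide)
    ultimately show ?thesis unfolding mmf by linarith
  qed
  assume S: "S \<subseteq> V" "S \<noteq> {}" "dens E S = lam"
  have fS: "finite S" using S fV finite_subset by blast
  have cS: "real (card S) > 0" using fS S by (simp add: card_gt_0_iff)
  have ce: "real (card (edges_in E S)) = lam * real (card S)"
  proof -
    have "lam = real (card (edges_in E S)) / real (card S)" using S(3) by (simp add: dens_def)
    then show ?thesis using cS by simp
  qed
  have "real (card (edges_in E S)) \<le> (\<Sum>v\<in>S. real (qdeg E ?s v))"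
  proof -
    have "card (edges_in E S) \<le> (\<Sum>v\<in>S. qdeg E ?s v)" using sumq_ge[OF sp(1) _ E2, of S] S sp(2) by simp
    then have "real (card (edges_in E S)) \<le> real (\<Sum>v\<in>S. qdeg E ?s v)" by linarith
    then show ?thesis by simp
  qed
  then have le: "lam * real (card S) - (\<Sum>v\<in>S. real (qdeg E ?s v)) \<le> 0" using ce by simp
  have "(\<Sum>v\<in>S. mm V E lam R eta Z k v) = (lam * real (card S) - (\<Sum>v\<in>S. real (qdeg E ?s v))) / (real n + tau)"
    unfolding mmf by (simp add: sum_divide_distrib[symmetric] sum_subtractf)
  also have "\<dots> \<le> 0" using le tau by (simp add: divide_nonpos_pos)
  finally show "(\<Sum>v\<in>S. mm V E lam R eta Z k v) \<le> 0" .
qed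

lemma sig_eq: "mwu_sigma V E lam R eta Z t = ordk V E lam R eta Z (t - 1)"
  by (simp add: mwu_sigma_def mwu_p_def ordk_def)

theorem mainTheorem7:
  fixes V :: "'a::linorder set" and E :: "'a set set" and T :: nat and \<tau> :: real
    and n :: nat and lam R \<nu> \<eta> \<alpha> :: real
    and M :: "((nat \<times> 'a \<Rightarrow> real) \<times> nat) measure"
  assumes G: "simple_graph V E"
    and n_def: "n = card V"
    and n2: "n \<ge> 2"
    and Ene: "E \<noteq> {}"
    and T1: "T \<ge> 1"
    and tau: "\<tau> > 0"
    and lam_def: "lam = max_density V E"
    and R_def: "R = (real n + \<tau>) / lam"
    and nu_def: "\<nu> = \<tau> / (R * lam)"
    and eta_def: "\<eta> = sqrt (ln (real n) / real T)"
    and alpha_def: "\<alpha> = 8 * R * sqrt (ln (real n) / real T)"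
    and M_def: "M = mwu_space V T \<nu>"
  shows "(\<forall>\<omega>\<in>space M.
            let p = mwu_p V E lam R \<eta> (fst \<omega>) (snd \<omega>);
                \<sigma> = mwu_sigma V E lam R \<eta> (fst \<omega>) (snd \<omega>)
            in distinct \<sigma> \<and> set \<sigma> = V \<and> sorted_wrt (\<lambda>u v. p u \<ge> p v) \<sigma>)
       \<and> measure M {\<omega> \<in> space M.
            dens E (best_prefix E (mwu_sigma V E lam R \<eta> (fst \<omega>) (snd \<omega>)))
              \<ge> (1 - 2 * \<alpha>) * lam} \<ge> 1 / 2"
proof -
  have fV: "finite V" and EV: "\<forall>e\<in>E. e \<subseteq> V \<and> card e = 2" using G by (auto simp: simple_graph_def)
  have Vne: "V \<noteq> {}" using n2 n_def by auto
  note lf = max_density_facts[OF G Ene, folded lam_def]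
  have lpos: "lam > 0" using lf(3) .
  have Rl: "R * lam = real n + \<tau>" using lpos by (simp add: R_def)
  have Rpos: "R > 0" using lpos tau by (simp add: R_def)
  have nupos: "\<nu> > 0" and nu1: "\<nu> < 1" using tau n2 by (simp_all add: nu_def Rl)
  have lnpos: "ln (real n) > 0" using n2 by simp
  have Tpos: "real T > 0" using T1 by simp
  have etapos: "\<eta> > 0" using lnpos Tpos by (simp add: eta_def)
  have eta2: "\<eta>\<^sup>2 = ln (real n) / real T" using lnpos Tpos by (simp add: eta_def)
  have alpha_eta: "\<alpha> = 8 * R * \<eta>" by (simp add: alpha_def eta_def)
  let ?N = "density lborel (normal_density 0 \<nu>)"
  let ?P = "PiM ({1..T} \<times> V) (\<lambda>_. ?N)"
  let ?U = "uniform_count_measure {1..T}"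
  have Meq: "M = ?P \<Otimes>\<^sub>M ?U" by (simp add: M_def mwu_space_def)
  interpret P: prob_space ?P by (rule prob_space_PiM) (rule prob_N[OF nupos])
  interpret U: prob_space ?U by (rule prob_space_uniform_count_measure) (use T1 in auto)
  have Mprob: "prob_space M" unfolding Meq by (rule prob_space_pair) unfold_locales
  have spM: "space M = space ?P \<times> {1..T}" unfolding Meq by (simp add: space_pair_measure space_uniform_count_measure)
  show ?thesis
  proof (intro conjI)
    show "\<forall>\<omega>\<in>space M.
            let p = mwu_p V E lam R \<eta> (fst \<omega>) (snd \<omega>);
                \<sigma> = mwu_sigma V E lam R \<eta> (fst \<omega>) (snd \<omega>)
            in distinct \<sigma> \<and> set \<sigma> = V \<and> sorted_wrt (\<lambda>u v. p u \<ge> p v) \<sigma>"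
      using order_by_props[OF fV] by (simp add: Let_def mwu_sigma_def)
    define good where "good j Z = ((1 - 2 * \<alpha>) * lam \<le> dens E (best_prefix E (ordk V E lam R \<eta> Z j)))" for j Z
    have Aeq: "{\<omega> \<in> space M. dens E (best_prefix E (mwu_sigma V E lam R \<eta> (fst \<omega>) (snd \<omega>))) \<ge> (1 - 2 * \<alpha>) * lam}
        = {\<omega> \<in> space M. good (snd \<omega> - 1) (fst \<omega>)}"
      by (simp add: sig_eq good_def)
    show "measure M {\<omega> \<in> space M. dens E (best_prefix E (mwu_sigma V E lam R \<eta> (fst \<omega>) (snd \<omega>))) \<ge> (1 - 2 * \<alpha>) * lam} \<ge> 1 / 2"
    proof (cases "\<alpha> \<ge> 1 / 2")
      case True
      have "{\<omega> \<in> space M. good (snd \<omega> - 1) (fst \<omega>)} = space M"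
      proof -
        have "good j Z" for j Z
        proof -
          have "(1 - 2 * \<alpha>) * lam \<le> 0" using True lpos by (simp add: mult_nonpos_nonneg)
          then show ?thesis unfolding good_def using dens_nonneg by (meson order_trans)
        qed
        then show ?thesis by auto
      qed
      then show ?thesis unfolding Aeq using prob_space.prob_space[OF Mprob] by simp
    next
      case False
      then have al: "\<alpha> < 1 / 2" by simp
      have Rgt1: "R \<ge> 1"
      proof -
        have "lam \<le> real n" using lf(4) n_def by simp
        then have "1 * lam \<le> R * lam" using Rl tau by simp
        then show ?thesis using lpos by (simp add: mult_le_cancel_right)
      qed
      have eta1: "\<eta> \<le> 1"
      proof -
        have "8 * \<eta> \<le> 8 * R * \<eta>" using Rgt1 etapos by simp
        then show ?thesis using al alpha_eta by linarith
      qed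
      note mb = mm_facts(1)[OF G Ene lam_def n_def Rl tau]
      obtain S where S: "S \<subseteq> V" "S \<noteq> {}" "dens E S = lam" using lf(2) by metis
      have hS: "(\<Sum>v\<in>S. mm V E lam R \<eta> Z j v) \<le> 0" for Z j
        using mm_facts(2)[OF G Ene lam_def n_def Rl tau S(1) S(2) S(3)] .
      note EB = expect_bound[OF fV Vne nupos less_imp_le[OF etapos] eta1 mb S(1) S(2) hS, of T]
      define XS where "XS Z = (\<Sum>j<T. XX V E lam R \<eta> Z j)" for Z
      have XSi: "integrable ?P XS" using EB(1) by (simp add: XS_def[abs_def])
      have ES: "(\<integral>Z. XS Z \<partial>?P) \<le> real T * \<eta> * (2 + \<nu>\<^sup>2 / 2)"
      proof -
        have "\<eta> * (\<integral>Z. XS Z \<partial>?P) \<le> ln (real n) + real T * (\<eta>\<^sup>2 * \<nu>\<^sup>2 / 2 + \<eta>\<^sup>2)"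
          using EB(2) n_def by (simp add: XS_def[abs_def])
        also have "\<dots> = \<eta> * (real T * \<eta> * (2 + \<nu>\<^sup>2 / 2))"
          using eta2 Tpos by (simp add: field_simps power2_eq_square)
        finally show ?thesis using etapos by simp
      qed
      define c where "c = 16 * \<eta>"
      have cpos: "c > 0" using etapos by (simp add: c_def)
      have ceq: "2 * \<alpha> / R = c" using Rpos by (simp add: alpha_eta c_def)
      have ind: "(if good j Z then 1 else 0) \<ge> 1 - XX V E lam R \<eta> Z j / c" for j Z
      proof (cases "good j Z")
        case True
        have "XX V E lam R \<eta> Z j / c \<ge> 0" using XX_good(1)[OF G Ene lam_def Rpos] cpos by simp
        then show ?thesis using True by simp
      next
        case False
        then have "dens E (best_prefix E (ordk V E lam R \<eta> Z j)) < (1 - 2 * \<alpha>) * lam"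
          by (simp add: good_def)
        from XX_good(2)[OF G Ene lam_def Rpos this] have "XX V E lam R \<eta> Z j > c" using ceq by simp
        then have "XX V E lam R \<eta> Z j / c > 1" using cpos by simp
        then show ?thesis using False by simp
      qed
      have mZ: "\<And>j v. j \<in> {1..T} \<Longrightarrow> v \<in> V \<Longrightarrow> (\<lambda>Z. Z (j, v)) \<in> borel_measurable ?P"
        by (rule coord_meas) auto
      have om: "(\<lambda>Z. ordk V E lam R \<eta> Z j) \<in> measurable ?P (count_space (LL V))" if "j < T" for j
        using that by (intro measurable_ordk(1)[OF fV _ mZ]) auto
      have gm: "{Z \<in> space ?P. good j Z} \<in> sets ?P" if "j < T" for j
      proof -
        have "(\<lambda>Z. (\<lambda>s. (1 - 2 * \<alpha>) * lam \<le> dens E (best_prefix E s)) (ordk V E lam R \<eta> Z j)) \<in> measurable ?P (count_space UNIV)"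
          by (rule measurable_compose[OF om[OF that] measurable_count_space])
        then have "Measurable.pred ?P (good j)" by (simp add: good_def[abs_def])
        then show ?thesis by (simp add: pred_def)
      qed
      have im: "(\<lambda>Z. if good j Z then 1 else 0 :: real) \<in> borel_measurable ?P" if "j < T" for j
      proof -
        have "(\<lambda>Z. (\<lambda>s. if (1 - 2 * \<alpha>) * lam \<le> dens E (best_prefix E s) then 1 else 0 :: real) (ordk V E lam R \<eta> Z j)) \<in> borel_measurable ?P"
          by (rule measurable_compose[OF om[OF that] borel_measurable_count_space])
        then show ?thesis by (simp add: good_def)
      qed
      define cnt where "cnt Z = (\<Sum>j<T. if good j Z then 1 else 0 :: real)" for Z
      have cntm: "cnt \<in> borel_measurable ?P" unfolding cnt_def[abs_def]
        using im by (intro borel_measurable_sum) auto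
      have cnt_nn: "0 \<le> cnt Z" for Z unfolding cnt_def by (intro sum_nonneg) auto
      have cnt_le: "cnt Z \<le> real T" for Z
      proof -
        have "cnt Z \<le> (\<Sum>j<T. 1)" unfolding cnt_def by (intro sum_mono) auto
        then show ?thesis by simp
      qed
      have cnti: "integrable ?P (\<lambda>Z. cnt Z / real T)"
        using cnt_nn cnt_le Tpos
        by (intro P.integrable_const_bound[where B = 1] borel_measurable_divide cntm measurable_const) auto
      define Aset where "Aset = {\<omega> \<in> space M. good (snd \<omega> - 1) (fst \<omega>)}"
      have Aeq2: "Aset = (\<Union>t\<in>{1..T}. {Z \<in> space ?P. good (t - 1) Z} \<times> {t})"
        unfolding Aset_def spM by auto
      have Ameas: "Aset \<in> sets (?P \<Otimes>\<^sub>M ?U)"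
        unfolding Aeq2
      proof (intro sets.finite_UN pair_measureI)
        fix t assume t: "t \<in> {1..T}"
        show "{Z \<in> space ?P. good (t - 1) Z} \<in> sets ?P" using t by (intro gm) auto
        show "{t} \<in> sets ?U" using t by (simp add: sets_uniform_count_measure)
      qed auto
      have slice: "emeasure ?U (Pair Z -` Aset) = ennreal (cnt Z / real T)" if Z: "Z \<in> space ?P" for Z
      proof -
        have pe: "Pair Z -` Aset = Suc ` {j \<in> {..<T}. good j Z}"
        proof (intro equalityI subsetI)
          fix t assume "t \<in> Pair Z -` Aset"
          then have t: "t \<in> {1..T}" "good (t - 1) Z" unfolding Aset_def spM by auto
          then show "t \<in> Suc ` {j \<in> {..<T}. good j Z}" by (intro image_eqI[of _ _ "t - 1"]) auto
        next
          fix t assume "t \<in> Suc ` {j \<in> {..<T}. good j Z}"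
          then show "t \<in> Pair Z -` Aset" unfolding Aset_def spM using Z by auto
        qed
        have "card (Pair Z -` Aset) = card {j \<in> {..<T}. good j Z}"
          unfolding pe by (rule card_image) simp
        moreover have "real (card {j \<in> {..<T}. good j Z}) = cnt Z"
          unfolding cnt_def by (simp add: sum.inter_filter[symmetric])
        moreover have sub: "Pair Z -` Aset \<subseteq> {1..T}" unfolding pe by auto
        have e1: "emeasure ?U (Pair Z -` Aset) = ennreal (measure ?U (Pair Z -` Aset))"
          by (rule U.emeasure_eq_measure)
        have e2: "measure ?U (Pair Z -` Aset) = real (card (Pair Z -` Aset)) / real (card {1..T})"
          by (rule measure_uniform_count_measure[OF _ sub]) simp
        ultimately show ?thesis using e1 e2 by simp
      qed
      have "emeasure M Aset = (\<integral>\<^sup>+Z. emeasure ?U (Pair Z -` Aset) \<partial>?P)"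
        unfolding Meq by (rule U.emeasure_pair_measure_alt[OF Ameas])
      also have "\<dots> = (\<integral>\<^sup>+Z. ennreal (cnt Z / real T) \<partial>?P)"
        by (rule nn_integral_cong) (rule slice)
      also have "\<dots> = ennreal (\<integral>Z. cnt Z / real T \<partial>?P)"
        using cnti cnt_nn Tpos by (intro nn_integral_eq_integral) auto
      finally have mA: "measure M Aset = (\<integral>Z. cnt Z / real T \<partial>?P)"
        using cnt_nn Tpos by (simp add: measure_def integral_nonneg_AE)
      have "(\<integral>Z. (real T - XS Z / c) / real T \<partial>?P) \<le> (\<integral>Z. cnt Z / real T \<partial>?P)"
      proof (rule integral_mono)
        show "integrable ?P (\<lambda>Z. (real T - XS Z / c) / real T)"
          using XSi by (intro integrable_divide_zero Bochner_Integration.integrable_diff P.integrable_const) auto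
        show "integrable ?P (\<lambda>Z. cnt Z / real T)" by (rule cnti)
        fix Z
        have "real T - XS Z / c = (\<Sum>j<T. 1 - XX V E lam R \<eta> Z j / c)"
          by (simp add: XS_def sum_subtractf sum_divide_distrib)
        also have "\<dots> \<le> cnt Z" unfolding cnt_def by (intro sum_mono ind)
        finally show "(real T - XS Z / c) / real T \<le> cnt Z / real T"
          using Tpos by (simp add: divide_right_mono)
      qed
      moreover have "(\<integral>Z. (real T - XS Z / c) / real T \<partial>?P) = 1 - (\<integral>Z. XS Z \<partial>?P) / (c * real T)"
      proof -
        have ps: "measure ?P (space ?P) = 1" by (rule P.prob_space)
        have "(\<integral>Z. (real T - XS Z / c) / real T \<partial>?P) = (\<integral>Z. real T - XS Z / c \<partial>?P) / real T"
          by simp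
        also have "(\<integral>Z. real T - XS Z / c \<partial>?P) = (\<integral>Z. real T \<partial>?P) - (\<integral>Z. XS Z / c \<partial>?P)"
          using XSi by (intro Bochner_Integration.integral_diff P.integrable_const integrable_divide_zero)
        also have "\<dots> = real T - (\<integral>Z. XS Z \<partial>?P) / c" using ps by simp
        finally show ?thesis using Tpos cpos by (simp add: field_simps)
      qed
      moreover have "(\<integral>Z. XS Z \<partial>?P) / (c * real T) \<le> 1 / 2"
      proof -
        have "(\<integral>Z. XS Z \<partial>?P) / (c * real T) \<le> (real T * \<eta> * (2 + \<nu>\<^sup>2 / 2)) / (c * real T)"
          using ES cpos Tpos by (intro divide_right_mono) auto
        also have "\<dots> = (2 + \<nu>\<^sup>2 / 2) / 16" using etapos Tpos by (simp add: c_def field_simps)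
        also have "\<dots> \<le> 1 / 2"
        proof -
          have "\<nu>\<^sup>2 \<le> 1" using nupos nu1 by (simp add: power_le_one)
          then show ?thesis by simp
        qed
        finally show ?thesis .
      qed
      ultimately have "measure M Aset \<ge> 1 / 2" unfolding mA by linarith
      then show ?thesis unfolding Aeq Aset_def .
    qed
  qed
qed


end
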